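(* Let $N\ge1$, $d\ge1$, and let $U_1,\dots,U_N:\mathbb{R}^d\to\mathbb{R}$ and $U=\sum_n U_n$ satisfy: (A1) each $U_n$ is $C^2$ with $K$-Lipschitz gradient for some $K>0$; (A2) each $U_n$ is coercive and there is $C_1>0$ with $\langle x,\nabla U_n(x)\rangle\ge0$ for $\|x\|\ge C_1$; (A3) $\min_x U(x)=0$ and $\inf_x(\|\nabla U(x)\|^2-\Delta U(x))>-\infty$; (A4) the probability measures $\pi^\varepsilon$ with density proportional to $\exp(-2U(x)/\varepsilon^2)$ have a weak limit as $\varepsilon\to0$; (A5) $\liminf_{\|x\|\to\infty}\langle \nabla U(x)/\|\nabla U(x)\|, x/\|x\|\rangle\ge((4d-4)/(4d-3))^{1/2}$, $\liminf_{\|x\|\to\infty}\|\nabla U(x)\|/\|x\|>0$, $\limsup_{\|x\|\to\infty}\|\nabla U(x)\|/\|x\|<\infty$. Let $G$ be an undirected connected graph on $\{1,\dots,N\}$ with Laplacian $L$. Let $\mathbf{x}_t\in\mathbb{R}^{Nd}$ (stacking $\mathbf{x}_n(t)\in\mathbb{R}^d$) satisfy $$\mathbf{x}_{t+1}=\mathbf{x}_t-\beta_t(L\otimes I_d)\mathbf{x}_t-\alpha_t\big(\nabla\hat U(\mathbf{x}_t)+\boldsymbol{\xi}_t\big)+\gamma_t\mathbf{w}_t,$$ where $\hat U(\mathbf{x})=\sum_{n=1}^N U_n(\mathbf{x}_n)$, and with $\mathcal{F}_t$ the natural filtration generated by $\{\mathbf{x}_s\}_{s\le t}$, $\{\boldsymbol{\xi}_s,\mathbf{w}_s\}_{s\le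 t-1}$: (A6) $\{\boldsymbol{\xi}_t\}$ is $\{\mathcal{F}_{t+1}\}$-adapted, $\mathbb{E}[\boldsymbol{\xi}_t\mid\mathcal{F}_t]=0$, $\mathbb{E}[\|\boldsymbol{\xi}_t\|^2\mid\mathcal{F}_t]<B$ for some $B>0$; (A7) $\mathbf{w}_t=(\mathbf{w}_n(t))_n$ where each $\{\mathbf{w}_n(t)\}_t$ is i.i.d. standard Gaussian in $\mathbb{R}^d$, $\mathbf{w}_n(t)$ is independent of $\mathcal{F}_t$, and the sequences for different $n$ are mutually independent; (A8) for $t$ large, $\alpha_t=c_\alpha/t$, $\beta_t=c_\beta/t^{\tau_\beta}$, $\gamma_t=c_\gamma/(t^{1/2}\sqrt{\log\log t})$ with $c_\alpha,c_\beta,c_\gamma>0$, $\tau_\beta\in(0,1/2)$. Then for every $\eta>1/2$, with probability 1, $$\sup_{t\ge1}\frac{\|\mathbf{x}_t\|}{t^\eta}<\infty.$$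
   Context: $\otimes$ is the Kronecker product; $\|\cdot\|$ is the Euclidean norm; the initial condition $\mathbf{x}_1$ is deterministic. *)

theory Defs
  imports "HOL-Probability.Probability"
begin

definition graph_laplacian :: "('n::finite \<Rightarrow> 'n \<Rightarrow> bool) \<Rightarrow> 'n \<Rightarrow> 'n \<Rightarrow> real" where
  "graph_laplacian E i j =
     (if i = j then real (card {k. E i k}) else if E i j then -1 else 0)"

definition undirected_graph :: "('n \<Rightarrow> 'n \<Rightarrow> bool) \<Rightarrow> bool" where
  "undirected_graph E \<longleftrightarrow> (\<forall>i j. E i j \<longleftrightarrow> E j i) \<and> (\<forall>i. \<not> E i i)"

definition connected_graph :: "('n \<Rightarrow> 'n \<Rightarrow> bool) \<Rightarrow> bool" where
  "connected_graph E \<longleftrightarrow> (\<forall>i j. E\<^sup>*\<^sup>* i j)"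

text \<open>(L \<otimes> I_d) applied to a stacked vector.\<close>
definition kron_lap :: "('n::finite \<Rightarrow> 'n \<Rightarrow> real) \<Rightarrow> real^'d^'n \<Rightarrow> real^'d^'n" where
  "kron_lap L x = (\<chi> n. \<Sum>m\<in>UNIV. L n m *\<^sub>R (x $ m))"

definition nat_filtration ::
  "'a measure \<Rightarrow> (nat \<Rightarrow> 'a \<Rightarrow> 'b::topological_space) \<Rightarrow> (nat \<Rightarrow> 'a \<Rightarrow> 'b)
     \<Rightarrow> (nat \<Rightarrow> 'a \<Rightarrow> 'b) \<Rightarrow> nat \<Rightarrow> 'a measure" where
  "nat_filtration M x xi w t = sigma (space M)
     ({x s -` A \<inter> space M | s A. 1 \<le> s \<and> s \<le> t \<and> A \<in> sets borel} \<union>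
      {xi s -` A \<inter> space M | s A. 1 \<le> s \<and> s < t \<and> A \<in> sets borel} \<union>
      {w s -` A \<inter> space M | s A. 1 \<le> s \<and> s < t \<and> A \<in> sets borel})"

definition gibbs_Z :: "('d::euclidean_space \<Rightarrow> real) \<Rightarrow> real \<Rightarrow> real" where
  "gibbs_Z U \<epsilon> = (\<integral>x. exp (- 2 * U x / \<epsilon>\<^sup>2) \<partial>lborel)"

definition gibbs_weak_limit_exists :: "('d::euclidean_space \<Rightarrow> real) \<Rightarrow> bool" where
  "gibbs_weak_limit_exists U \<longleftrightarrow>
     (\<forall>\<epsilon>>0. integrable lborel (\<lambda>x. exp (- 2 * U x / \<epsilon>\<^sup>2)) \<and> gibbs_Z U \<epsilon> > 0) \<and>
     (\<exists>\<mu>. prob_space \<mu> \<and> sets \<mu> = sets (borel :: 'd measure) \<and>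
        (\<forall>f :: 'd \<Rightarrow> real. continuous_on UNIV f \<and> bounded (range f) \<longrightarrow>
           ((\<lambda>\<epsilon>. (\<integral>x. f x * exp (- 2 * U x / \<epsilon>\<^sup>2) \<partial>lborel) / gibbs_Z U \<epsilon>)
              \<longlongrightarrow> (\<integral>x. f x \<partial>\<mu>)) (at_right 0)))"

end

theory Submission
  imports Defs
begin

lemma meas_vec_nth[measurable]: "(\<lambda>v::'b::real_normed_vector^'n. v $ i) \<in> borel_measurable borel"
  by (rule borel_measurable_continuous_onI) (intro continuous_intros)

lemma meas_vec_nth'[measurable]: "f \<in> borel_measurable M \<Longrightarrow> (\<lambda>x. (f x :: 'b::real_normed_vector^'n) $ i) \<in> borel_measurable M"
  using measurable_compose[OF _ meas_vec_nth] by blast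

lemma Basis_vec_img: "(Basis :: (real^'d) set) = (\<lambda>j. axis j 1) ` UNIV"
  unfolding Basis_vec_def by auto

lemma nn_std_normal_one: "(\<integral>\<^sup>+x. ennreal (std_normal_density x) \<partial>lborel) = 1"
proof -
  have "prob_space (density lborel (normal_density 0 1))" by (rule prob_space_normal_density) simp
  then have "emeasure (density lborel (normal_density 0 1)) UNIV = 1"
    using prob_space.emeasure_space_1 by fastforce
  then show ?thesis by (simp add: emeasure_density)
qed

lemma gauss_prod_int:
  fixes h :: "real \<Rightarrow> ennreal" and i :: "'d::finite"
  assumes [measurable]: "h \<in> borel_measurable borel"
  shows "(\<integral>\<^sup>+v. ennreal (\<Prod>j\<in>UNIV. std_normal_density (v $ j)) * h (v $ i) \<partial>(lborel::(real^'d) measure))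
     = (\<integral>\<^sup>+x. ennreal (std_normal_density x) * h x \<partial>lborel)"
proof -
  define f where "f b x = (if b = axis i 1 then ennreal (std_normal_density x) * h x else ennreal (std_normal_density x))" for b :: "real^'d" and x
  have inj: "inj (\<lambda>j::'d. axis j (1::real))" by (auto simp: inj_def axis_eq_axis)
  have eq: "ennreal (\<Prod>j\<in>UNIV. std_normal_density (v $ j)) * h (v $ i) = (\<Prod>b\<in>Basis. f b (v \<bullet> b))" for v :: "real^'d"
  proof -
    have "(\<Prod>b\<in>Basis. f b (v \<bullet> b)) = (\<Prod>j\<in>UNIV. f (axis j 1) (v $ j))"
      unfolding Basis_vec_img by (subst prod.reindex[OF inj]) (simp add: inner_axis)
    also have "\<dots> = (\<Prod>j\<in>UNIV. ennreal (std_normal_density (v $ j)) * (if j = i then h (v $ j) else 1))"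
      by (intro prod.cong) (auto simp: f_def axis_eq_axis)
    also have "\<dots> = (\<Prod>j\<in>UNIV. ennreal (std_normal_density (v $ j))) * h (v $ i)"
      by (simp add: prod.distrib prod.delta)
    finally show ?thesis by (simp add: prod_ennreal)
  qed
  have "(\<integral>\<^sup>+v. ennreal (\<Prod>j\<in>UNIV. std_normal_density (v $ j)) * h (v $ i) \<partial>(lborel::(real^'d) measure))
     = (\<integral>\<^sup>+v. (\<Prod>b\<in>Basis. f b (v \<bullet> b)) \<partial>(lborel::(real^'d) measure))" by (simp add: eq)
  also have "\<dots> = (\<Prod>b\<in>Basis. (\<integral>\<^sup>+x. f b x \<partial>lborel))"
    by (rule nn_integral_lborel_prod) (auto simp: f_def)
  also have "\<dots> = (\<Prod>j\<in>UNIV. (\<integral>\<^sup>+x. f (axis j 1) x \<partial>lborel))"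
    unfolding Basis_vec_img by (subst prod.reindex[OF inj]) simp
  also have "\<dots> = (\<Prod>j\<in>UNIV. (if j = i then (\<integral>\<^sup>+x. ennreal (std_normal_density x) * h x \<partial>lborel) else 1))"
    by (intro prod.cong) (auto simp: f_def axis_eq_axis nn_std_normal_one)
  also have "\<dots> = (\<integral>\<^sup>+x. ennreal (std_normal_density x) * h x \<partial>lborel)"
    by (simp add: prod.delta)
  finally show ?thesis .
qed

lemma gauss_marginal:
  fixes W :: "'a \<Rightarrow> real^'d::finite"
  assumes D: "distributed M lborel W (\<lambda>v. ennreal (\<Prod>j\<in>UNIV. std_normal_density (v $ j)))"
  shows "distributed M lborel (\<lambda>\<omega>. W \<omega> $ i) (\<lambda>x. ennreal (std_normal_density x))"
proof -
  have Wm[measurable]: "W \<in> borel_measurable M" using D by (simp add: distributed_def)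
  have deq: "distr M lborel W = density lborel (\<lambda>v. ennreal (\<Prod>j\<in>UNIV. std_normal_density (v $ j)))"
    using D by (simp add: distributed_def)
  have "distr M lborel (\<lambda>\<omega>. W \<omega> $ i) = density lborel (\<lambda>x. ennreal (std_normal_density x))"
  proof (rule measure_eqI)
    show "sets (distr M lborel (\<lambda>\<omega>. W \<omega> $ i)) = sets (density lborel (\<lambda>x. ennreal (std_normal_density x)))" by simp
  next
    fix A assume "A \<in> sets (distr M lborel (\<lambda>\<omega>. W \<omega> $ i))"
    then have A[measurable]: "A \<in> sets borel" by simp
    have "emeasure (distr M lborel (\<lambda>\<omega>. W \<omega> $ i)) A = emeasure M ((\<lambda>\<omega>. W \<omega> $ i) -` A \<inter> space M)"
      by (rule emeasure_distr) auto
    also have "\<dots> = emeasure M (W -` {v. v $ i \<in> A} \<inter> space M)" by (simp add: vimage_def)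
    also have "\<dots> = emeasure (distr M lborel W) {v. v $ i \<in> A}"
      by (rule emeasure_distr[symmetric]) auto
    also have "\<dots> = (\<integral>\<^sup>+v. ennreal (\<Prod>j\<in>UNIV. std_normal_density (v $ j)) * indicator A (v $ i) \<partial>lborel)"
      unfolding deq by (subst emeasure_density) (auto intro!: nn_integral_cong split: split_indicator)
    also have "\<dots> = (\<integral>\<^sup>+x. ennreal (std_normal_density x) * indicator A x \<partial>lborel)"
      by (rule gauss_prod_int) simp
    also have "\<dots> = emeasure (density lborel (\<lambda>x. ennreal (std_normal_density x))) A"
      by (subst emeasure_density) (auto intro!: nn_integral_cong split: split_indicator)
    finally show "emeasure (distr M lborel (\<lambda>\<omega>. W \<omega> $ i)) A = emeasure (density lborel (\<lambda>x. ennreal (std_normal_density x))) A" .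
  qed
  then show ?thesis by (simp add: distributed_def)
qed

lemma norm_vec_sq: "(norm (X :: 'b::real_normed_vector^'n))\<^sup>2 = (\<Sum>i\<in>UNIV. (norm (X $ i))\<^sup>2)"
  unfolding norm_vec_def L2_set_def by (simp add: sum_nonneg)

lemma inner_vec_outer: "(X::real^'d^'n) \<bullet> Y = (\<Sum>i\<in>UNIV. X$i \<bullet> Y$i)"
  by (rule inner_vec_def)

lemma lap_comp:
  assumes "undirected_graph E"
  shows "kron_lap (graph_laplacian E) X $ i = (\<Sum>m\<in>UNIV. if E i m then X $ i - X $ m else 0)"
proof -
  have nE: "\<not> E i i" using assms by (simp add: undirected_graph_def)
  have "kron_lap (graph_laplacian E) X $ i = (\<Sum>m\<in>UNIV. graph_laplacian E i m *\<^sub>R X $ m)"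
    by (simp add: kron_lap_def)
  also have "\<dots> = (\<Sum>m\<in>UNIV. (if m = i then real (card {k. E i k}) *\<^sub>R X $ i else 0) + (if E i m then - X $ m else 0))"
    by (intro sum.cong) (auto simp: graph_laplacian_def nE)
  also have "\<dots> = real (card {k. E i k}) *\<^sub>R X $ i + (\<Sum>m\<in>UNIV. if E i m then - X $ m else 0)"
    by (simp only: sum.distrib sum.delta' ) simp
  also have "(\<Sum>m\<in>UNIV. if E i m then - X $ m else 0) = - (\<Sum>m\<in>{m. E i m}. X $ m)"
    by (simp add: sum.If_cases sum_negf)
  also have "real (card {k. E i k}) *\<^sub>R X $ i + - (\<Sum>m\<in>{m. E i m}. X $ m) = (\<Sum>m\<in>{m. E i m}. X $ i - X $ m)"
    by (simp add: sum_subtractf sum_constant_scaleR del: sum_constant)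
  also have "\<dots> = (\<Sum>m\<in>UNIV. if E i m then X $ i - X $ m else 0)"
    by (simp add: sum.If_cases)
  finally show ?thesis .
qed

lemma lap_quad:
  fixes X :: "real^'d^'n"
  assumes "undirected_graph E"
  shows "2 * (X \<bullet> kron_lap (graph_laplacian E) X) = (\<Sum>i\<in>UNIV. \<Sum>m\<in>UNIV. if E i m then (norm (X $ i - X $ m))\<^sup>2 else 0)"
proof -
  define D where "D i m = (if E i m then X $ i - X $ m else 0)" for i m
  have sym: "E i m \<longleftrightarrow> E m i" for i m using assms by (simp add: undirected_graph_def)
  have S: "X \<bullet> kron_lap (graph_laplacian E) X = (\<Sum>i\<in>UNIV. \<Sum>m\<in>UNIV. X $ i \<bullet> D i m)"
    by (simp only: inner_vec_outer) (simp add: lap_comp[OF assms] D_def inner_sum_right)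
  have "(\<Sum>i\<in>UNIV. \<Sum>m\<in>UNIV. X $ i \<bullet> D i m) = (\<Sum>i\<in>UNIV. \<Sum>m\<in>UNIV. X $ m \<bullet> D m i)"
    by (rule sum.swap)
  also have "\<dots> = (\<Sum>i\<in>UNIV. \<Sum>m\<in>UNIV. - (X $ m \<bullet> D i m))"
  proof -
    have "X $ m \<bullet> D m i = - (X $ m \<bullet> D i m)" for i m
      using sym[of m i] by (auto simp: D_def inner_diff_right)
    then show ?thesis by simp
  qed
  also have "\<dots> = - (\<Sum>i\<in>UNIV. \<Sum>m\<in>UNIV. X $ m \<bullet> D i m)"
    by (simp add: sum_negf)
  finally have S2: "(\<Sum>i\<in>UNIV. \<Sum>m\<in>UNIV. X $ i \<bullet> D i m) = - (\<Sum>i\<in>UNIV. \<Sum>m\<in>UNIV. X $ m \<bullet> D i m)" .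
  have "2 * (X \<bullet> kron_lap (graph_laplacian E) X) = (\<Sum>i\<in>UNIV. \<Sum>m\<in>UNIV. X $ i \<bullet> D i m) - (\<Sum>i\<in>UNIV. \<Sum>m\<in>UNIV. X $ m \<bullet> D i m)"
    using S S2 by simp
  also have "\<dots> = (\<Sum>i\<in>UNIV. \<Sum>m\<in>UNIV. (X $ i - X $ m) \<bullet> D i m)"
    by (simp add: sum_subtractf inner_diff_left)
  also have "\<dots> = (\<Sum>i\<in>UNIV. \<Sum>m\<in>UNIV. if E i m then (norm (X $ i - X $ m))\<^sup>2 else 0)"
    by (intro sum.cong) (auto simp: D_def power2_norm_eq_inner)
  finally show ?thesis .
qed

lemma lap_norm:
  fixes X :: "real^'d^'n"
  assumes "undirected_graph E"
  shows "(norm (kron_lap (graph_laplacian E) X))\<^sup>2 \<le> 2 * real CARD('n) * (X \<bullet> kron_lap (graph_laplacian E) X)"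
proof -
  define D where "D i m = (if E i m then X $ i - X $ m else 0)" for i m
  have "(norm (kron_lap (graph_laplacian E) X))\<^sup>2 = (\<Sum>i\<in>UNIV. (norm (\<Sum>m\<in>UNIV. D i m))\<^sup>2)"
    by (simp add: norm_vec_sq lap_comp[OF assms] D_def)
  also have "\<dots> \<le> (\<Sum>i\<in>UNIV. real CARD('n) * (\<Sum>m\<in>UNIV. (norm (D i m))\<^sup>2))"
  proof (rule sum_mono)
    fix i
    have "(norm (\<Sum>m\<in>UNIV. D i m))\<^sup>2 \<le> (\<Sum>m\<in>UNIV. norm (D i m))\<^sup>2"
      by (intro power_mono norm_sum) simp
    also have "\<dots> \<le> (\<Sum>m\<in>UNIV. (norm (D i m))\<^sup>2) * card (UNIV :: 'n set)"
      by (rule sum_squared_le_sum_of_squares)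
    finally show "(norm (\<Sum>m\<in>UNIV. D i m))\<^sup>2 \<le> real CARD('n) * (\<Sum>m\<in>UNIV. (norm (D i m))\<^sup>2)"
      by (simp add: mult.commute)
  qed
  also have "\<dots> = real CARD('n) * (\<Sum>i\<in>UNIV. \<Sum>m\<in>UNIV. if E i m then (norm (X $ i - X $ m))\<^sup>2 else 0)"
    by (auto simp: sum_distrib_left D_def intro!: sum.cong)
  also have "\<dots> = 2 * real CARD('n) * (X \<bullet> kron_lap (graph_laplacian E) X)"
    by (simp add: lap_quad[OF assms])
  finally show ?thesis .
qed

lemma lap_nonneg:
  fixes X :: "real^'d^'n"
  assumes "undirected_graph E"
  shows "0 \<le> X \<bullet> kron_lap (graph_laplacian E) X"
proof -
  have "0 \<le> (\<Sum>i\<in>UNIV. \<Sum>m\<in>UNIV. if E i m then (norm (X $ i - X $ m))\<^sup>2 else 0)"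
    by (intro sum_nonneg) auto
  then show ?thesis using lap_quad[OF assms, of X] by simp
qed

lemma lap_bound:
  fixes X :: "real^'d^'n"
  assumes "undirected_graph E"
  shows "norm (kron_lap (graph_laplacian E) X) \<le> 2 * real CARD('n) * norm X"
proof -
  let ?L = "kron_lap (graph_laplacian E) X"
  have "(norm ?L)\<^sup>2 \<le> 2 * real CARD('n) * (X \<bullet> ?L)" by (rule lap_norm[OF assms])
  also have "\<dots> \<le> 2 * real CARD('n) * (norm X * norm ?L)"
    by (intro mult_left_mono norm_cauchy_schwarz) auto
  finally have "norm ?L * norm ?L \<le> (2 * real CARD('n) * norm X) * norm ?L"
    by (simp add: power2_eq_square algebra_simps)
  then show ?thesis
    by (cases "norm ?L = 0") (auto simp: mult_le_cancel_right)
qed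

lemma lap_contract:
  fixes X :: "real^'d^'n"
  assumes "undirected_graph E" "0 \<le> b" "b * real CARD('n) \<le> 1"
  shows "(norm (X - b *\<^sub>R kron_lap (graph_laplacian E) X))\<^sup>2 \<le> (norm X)\<^sup>2"
proof -
  let ?L = "kron_lap (graph_laplacian E) X"
  let ?Q = "X \<bullet> ?L"
  have "(norm (X - b *\<^sub>R ?L))\<^sup>2 = (norm X)\<^sup>2 - 2 * b * ?Q + b\<^sup>2 * (norm ?L)\<^sup>2"
    by (simp only: power2_norm_eq_inner) (simp add: inner_diff_left inner_diff_right power2_eq_square algebra_simps inner_commute)
  also have "b\<^sup>2 * (norm ?L)\<^sup>2 \<le> b\<^sup>2 * (2 * real CARD('n) * ?Q)"
    by (intro mult_left_mono lap_norm[OF assms(1)]) auto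
  also have "b\<^sup>2 * (2 * real CARD('n) * ?Q) = 2 * b * ?Q * (b * real CARD('n))"
    by (simp add: power2_eq_square)
  also have "\<dots> \<le> 2 * b * ?Q"
    using lap_nonneg[OF assms(1), of X] assms(2,3) by (simp add: mult_left_le)
  finally show ?thesis by simp
qed

definition ghat :: "('n \<Rightarrow> real^'d \<Rightarrow> real^'d) \<Rightarrow> real^'d^'n \<Rightarrow> real^'d^'n" where
  "ghat g X = (\<chi> n. g n (X $ n))"

lemma nd: "(norm (z - a *\<^sub>R g))\<^sup>2 = (norm z)\<^sup>2 - 2*a*(z \<bullet> g) + a\<^sup>2*(norm g)\<^sup>2" for z g :: "'a::real_inner"
proof -
  have "(norm (z - a *\<^sub>R g))\<^sup>2 = (z - a *\<^sub>R g) \<bullet> (z - a *\<^sub>R g)" by (rule power2_norm_eq_inner)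
  also have "\<dots> = z \<bullet> z - 2*a*(z \<bullet> g) + a\<^sup>2*(g \<bullet> g)"
    by (simp add: inner_diff_left inner_diff_right inner_commute[of g z] power2_eq_square right_diff_distrib)
  finally show ?thesis by (simp add: power2_norm_eq_inner)
qed

lemma lip_bound:
  assumes "K-lipschitz_on UNIV f"
  shows "norm (f y) \<le> norm (f 0) + K * norm y"
proof -
  have "dist (f y) (f 0) \<le> K * dist y 0" using lipschitz_onD[OF assms, of y 0] by simp
  then have "norm (f y - f 0) \<le> K * norm y" by (simp add: dist_norm)
  then show ?thesis using norm_triangle_ineq2[of "f y" "f 0"] by linarith
qed

lemma ghat_norm:
  fixes g :: "'n::finite \<Rightarrow> real^'d \<Rightarrow> real^'d"
  assumes lip: "\<And>n. K-lipschitz_on UNIV (g n)"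
  shows "(norm (ghat g X))\<^sup>2 \<le> (\<Sum>n\<in>UNIV. 2 * (norm (g n 0))\<^sup>2) + 2 * K\<^sup>2 * (norm X)\<^sup>2"
proof -
  have K: "0 \<le> K" using lip lipschitz_on_nonneg by blast
  have "(norm (ghat g X))\<^sup>2 = (\<Sum>n\<in>UNIV. (norm (g n (X $ n)))\<^sup>2)"
    by (simp add: norm_vec_sq ghat_def)
  also have "\<dots> \<le> (\<Sum>n\<in>UNIV. 2 * (norm (g n 0))\<^sup>2 + 2 * K\<^sup>2 * (norm (X $ n))\<^sup>2)"
  proof (rule sum_mono)
    fix n
    have h: "norm (g n (X $ n)) \<le> norm (g n 0) + K * norm (X $ n)" by (rule lip_bound[OF lip])
    have "(norm (g n (X $ n)))\<^sup>2 \<le> (norm (g n 0) + K * norm (X $ n))\<^sup>2"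
      using h by (intro power_mono) auto
    also have "\<dots> \<le> 2 * (norm (g n 0))\<^sup>2 + 2 * K\<^sup>2 * (norm (X $ n))\<^sup>2"
    proof -
      have i: "(norm (g n 0) + K * norm (X $ n))\<^sup>2 + (norm (g n 0) - K * norm (X $ n))\<^sup>2 = 2 * (norm (g n 0))\<^sup>2 + 2 * K\<^sup>2 * (norm (X $ n))\<^sup>2"
        by (simp add: power2_eq_square algebra_simps)
      have "0 \<le> (norm (g n 0) - K * norm (X $ n))\<^sup>2" by simp
      then show ?thesis using i by linarith
    qed
    finally show "(norm (g n (X $ n)))\<^sup>2 \<le> 2 * (norm (g n 0))\<^sup>2 + 2 * K\<^sup>2 * (norm (X $ n))\<^sup>2" .
  qed
  also have "\<dots> = (\<Sum>n\<in>UNIV. 2 * (norm (g n 0))\<^sup>2) + 2 * K\<^sup>2 * (norm X)\<^sup>2"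
    by (simp add: sum.distrib sum_distrib_left norm_vec_sq)
  finally show ?thesis .
qed

lemma ghat_inner:
  fixes g :: "'n::finite \<Rightarrow> real^'d \<Rightarrow> real^'d"
  assumes lip: "\<And>n. K-lipschitz_on UNIV (g n)"
    and C1: "C1 > 0" and A2: "\<And>n y. norm y \<ge> C1 \<Longrightarrow> y \<bullet> g n y \<ge> 0"
  shows "X \<bullet> ghat g X \<ge> - (\<Sum>n\<in>UNIV. C1 * (norm (g n 0) + K * C1))"
proof -
  have K: "0 \<le> K" using lip lipschitz_on_nonneg by blast
  have "X \<bullet> ghat g X = (\<Sum>n\<in>UNIV. X $ n \<bullet> g n (X $ n))"
    by (simp only: inner_vec_outer) (simp add: ghat_def)
  moreover have "(\<Sum>n\<in>UNIV. - (C1 * (norm (g n 0) + K * C1))) \<le> (\<Sum>n\<in>UNIV. X $ n \<bullet> g n (X $ n))"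
  proof (rule sum_mono)
    fix n
    show "- (C1 * (norm (g n 0) + K * C1)) \<le> X $ n \<bullet> g n (X $ n)"
    proof (cases "norm (X $ n) \<ge> C1")
      case True
      have "0 \<le> C1 * (norm (g n 0) + K * C1)" using C1 K by auto
      then show ?thesis using A2[OF True, of n] by linarith
    next
      case False
      have h: "norm (g n (X $ n)) \<le> norm (g n 0) + K * norm (X $ n)" by (rule lip_bound[OF lip])
      also have "\<dots> \<le> norm (g n 0) + K * C1" using False K by (intro add_left_mono mult_left_mono) auto
      finally have h2: "norm (g n (X $ n)) \<le> norm (g n 0) + K * C1" .
      have "\<bar>X $ n \<bullet> g n (X $ n)\<bar> \<le> norm (X $ n) * norm (g n (X $ n))" by (rule Cauchy_Schwarz_ineq2)
      also have "\<dots> \<le> C1 * (norm (g n 0) + K * C1)"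
        using False h2 C1 by (intro mult_mono) auto
      finally show ?thesis by linarith
    qed
  qed
  ultimately show ?thesis by (simp add: sum_negf)
qed

lemma step_det:
  fixes g :: "'n::finite \<Rightarrow> real^'d \<Rightarrow> real^'d" and X :: "real^'d^'n"
  assumes lip: "\<And>n. K-lipschitz_on UNIV (g n)"
    and C1: "C1 > 0" and A2: "\<And>n y. norm y \<ge> C1 \<Longrightarrow> y \<bullet> g n y \<ge> 0"
    and G: "undirected_graph E"
    and a: "0 \<le> a" and b: "0 \<le> b" "b * real CARD('n) \<le> 1"
  defines "N \<equiv> real CARD('n)"
    and "G2 \<equiv> (\<Sum>n\<in>UNIV. 2 * (norm (g n 0))\<^sup>2)"
    and "Cg \<equiv> (\<Sum>n\<in>UNIV. C1 * (norm (g n 0) + K * C1))"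
  shows "(norm (X - b *\<^sub>R kron_lap (graph_laplacian E) X - a *\<^sub>R ghat g X))\<^sup>2
     \<le> (1 + (2*a*b*N + (2*a*b*N + a\<^sup>2) * (2 * K\<^sup>2))) * (norm X)\<^sup>2 + (2*a*Cg + (2*a*b*N + a\<^sup>2) * G2)"
proof -
  let ?L = "kron_lap (graph_laplacian E) X"
  let ?g = "ghat g X"
  let ?z = "X - b *\<^sub>R ?L"
  define nX where "nX = norm X"
  define ng where "ng = norm ?g"
  define nL where "nL = norm ?L"
  define Q where "Q = ?L \<bullet> ?g"
  define P where "P = X \<bullet> ?g"
  have z: "(norm ?z)\<^sup>2 \<le> nX\<^sup>2" unfolding nX_def using lap_contract[OF G b] .
  have gi: "P \<ge> - Cg" unfolding Cg_def P_def by (rule ghat_inner[OF lip C1 A2])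
  have gn: "ng\<^sup>2 \<le> G2 + 2 * K\<^sup>2 * nX\<^sup>2" unfolding G2_def ng_def nX_def by (rule ghat_norm[OF lip])
  have Lb: "nL \<le> 2 * N * nX" unfolding N_def nL_def nX_def by (rule lap_bound[OF G])
  have e1: "(norm (?z - a *\<^sub>R ?g))\<^sup>2 = (norm ?z)\<^sup>2 - 2 * a * (?z \<bullet> ?g) + a\<^sup>2 * ng\<^sup>2"
    unfolding ng_def by (rule nd)
  have e2: "?z \<bullet> ?g = P - b * Q"
    unfolding P_def Q_def by (simp add: inner_diff_left)
  have eq: "(norm (?z - a *\<^sub>R ?g))\<^sup>2 = (norm ?z)\<^sup>2 - 2 * a * P + 2 * a * b * Q + a\<^sup>2 * ng\<^sup>2"
    unfolding e1 e2 by (simp add: right_diff_distrib)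
  have N0: "0 \<le> N" unfolding N_def by simp
  have nn: "0 \<le> nX" "0 \<le> ng" "0 \<le> nL" unfolding nX_def ng_def nL_def by auto
  have "Q \<le> nL * ng" unfolding Q_def nL_def ng_def by (rule norm_cauchy_schwarz)
  also have "\<dots> \<le> 2 * N * nX * ng" using Lb nn by (intro mult_right_mono) auto
  also have "\<dots> \<le> N * (nX\<^sup>2 + ng\<^sup>2)"
  proof -
    have i: "nX\<^sup>2 + ng\<^sup>2 - 2 * nX * ng = (nX - ng)\<^sup>2"
      by (simp add: power2_eq_square algebra_simps)
    have "0 \<le> (nX - ng)\<^sup>2" by simp
    then have "2 * nX * ng \<le> nX\<^sup>2 + ng\<^sup>2" using i by linarith
    then have "N * (2 * nX * ng) \<le> N * (nX\<^sup>2 + ng\<^sup>2)" using N0 by (rule mult_left_mono)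
    then show ?thesis by (simp add: mult.assoc)
  qed
  finally have Lg: "Q \<le> N * (nX\<^sup>2 + ng\<^sup>2)" .
  have ab: "0 \<le> a * b" using a b by simp
  have "a * (- P) \<le> a * Cg" using gi a by (intro mult_left_mono) auto
  then have t1: "- 2 * a * P \<le> 2 * a * Cg" by (simp add: mult.commute)
  have t2: "(2 * a * b) * Q \<le> (2 * a * b) * (N * (nX\<^sup>2 + ng\<^sup>2))"
    using Lg ab by (intro mult_left_mono) auto
  have t3: "(2*a*b*N + a\<^sup>2) * ng\<^sup>2 \<le> (2*a*b*N + a\<^sup>2) * (G2 + 2 * K\<^sup>2 * nX\<^sup>2)"
    using gn ab N0 by (intro mult_left_mono) auto
  have "(norm (?z - a *\<^sub>R ?g))\<^sup>2 \<le> nX\<^sup>2 + 2 * a * Cg + (2 * a * b) * (N * (nX\<^sup>2 + ng\<^sup>2)) + a\<^sup>2 * ng\<^sup>2"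
    using eq z t1 t2 by linarith
  also have "\<dots> = (1 + 2*a*b*N) * nX\<^sup>2 + 2 * a * Cg + (2*a*b*N + a\<^sup>2) * ng\<^sup>2"
    by (simp add: algebra_simps)
  also have "\<dots> \<le> (1 + 2*a*b*N) * nX\<^sup>2 + 2 * a * Cg + (2*a*b*N + a\<^sup>2) * (G2 + 2 * K\<^sup>2 * nX\<^sup>2)"
    using t3 by linarith
  also have "\<dots> = (1 + (2*a*b*N + (2*a*b*N + a\<^sup>2) * (2 * K\<^sup>2))) * nX\<^sup>2 + (2*a*Cg + (2*a*b*N + a\<^sup>2) * G2)"
    by (simp add: algebra_simps)
  finally show ?thesis unfolding nX_def by simp
qed

lemma powr_incr:
  fixes t \<delta> :: real
  assumes t: "1 \<le> t" and d: "0 < \<delta>" "\<delta> < 1"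
  shows "t powr (\<delta> - 1) \<le> (2 / \<delta>) * ((t + 1) powr \<delta> - t powr \<delta>)"
proof -
  have "\<exists>z. t < z \<and> z < t + 1 \<and> (t + 1) powr \<delta> - t powr \<delta> = (t + 1 - t) * (\<delta> * z powr (\<delta> - 1))"
    by (rule MVT2) (use t in \<open>auto intro!: has_real_derivative_powr\<close>)
  then obtain z where z: "t < z" "z < t + 1" "(t + 1) powr \<delta> - t powr \<delta> = (t + 1 - t) * (\<delta> * z powr (\<delta> - 1))"
    by blast
  have "(t + 1) powr (\<delta> - 1) \<le> z powr (\<delta> - 1)"
    using z t d by (intro powr_mono2') auto
  have e: "t powr (\<delta> - 1) = (t + 1) powr (\<delta> - 1) * (t / (t + 1)) powr (\<delta> - 1)"
    using t by (simp add: powr_divide)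
  have "(t / (t + 1)) powr (\<delta> - 1) \<le> (1/2) powr (\<delta> - 1)"
    using t d by (intro powr_mono2') (auto simp: field_simps)
  also have "(1/2::real) powr (\<delta> - 1) \<le> (1/2) powr (-1)"
    using d by (intro powr_mono') auto
  also have "(1/2::real) powr (-1) = 2" by (simp add: powr_minus)
  finally have q: "(t / (t + 1)) powr (\<delta> - 1) \<le> 2" .
  have "t powr (\<delta> - 1) \<le> 2 * (t + 1) powr (\<delta> - 1)"
    unfolding e using mult_left_mono[OF q, of "(t + 1) powr (\<delta> - 1)"] by (simp add: mult.commute)
  also have "\<dots> \<le> 2 * z powr (\<delta> - 1)" using \<open>(t + 1) powr (\<delta> - 1) \<le> z powr (\<delta> - 1)\<close> by simp
  also have "\<dots> = (2 / \<delta>) * ((t + 1) powr \<delta> - t powr \<delta>)" using z(3) d by simp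
  finally show ?thesis .
qed

lemma prod_le_exp_sum:
  fixes r :: "nat \<Rightarrow> real"
  assumes "\<And>t. 0 \<le> r t"
  shows "(\<Prod>s\<in>A. 1 + r s) \<le> exp (\<Sum>s\<in>A. r s)"
proof (cases "finite A")
  case True
  have "(\<Prod>s\<in>A. 1 + r s) \<le> (\<Prod>s\<in>A. exp (r s))"
    by (intro prod_mono) (auto simp: assms add_nonneg_nonneg exp_ge_add_one_self intro: order_trans[OF _ exp_ge_add_one_self] add_increasing assms)
  also have "\<dots> = exp (\<Sum>s\<in>A. r s)" using True by (simp add: exp_sum)
  finally show ?thesis .
qed simp

lemma seq_growth:
  fixes u r :: "nat \<Rightarrow> real"
  assumes d: "0 < \<delta>" "\<delta> < 1" and T1: "1 \<le> T1"
    and r0: "\<And>t. 0 \<le> r t" and rs: "summable r" and C: "0 \<le> C"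
    and step: "\<And>t. t \<ge> T1 \<Longrightarrow> u (Suc t) \<le> (1 + r t) * u t + C * real t powr (\<delta> - 1)"
  shows "\<exists>Q. \<forall>t\<ge>T1. u t \<le> Q * real t powr \<delta>"
proof -
  define P where "P t = (\<Prod>s\<in>{T1..<t}. 1 + r s)" for t
  define R where "R = exp (suminf r)"
  define A where "A = max 0 (u T1)"
  have P1: "1 \<le> P t" for t unfolding P_def using r0 by (intro prod_ge_1) (auto intro: add_increasing)
  have PR: "P t \<le> R" for t
  proof -
    have "P t \<le> exp (\<Sum>s\<in>{T1..<t}. r s)" unfolding P_def by (rule prod_le_exp_sum[OF r0])
    also have "(\<Sum>s\<in>{T1..<t}. r s) \<le> suminf r" using rs r0 by (intro sum_le_suminf) auto
    finally show ?thesis unfolding R_def by simp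
  qed
  have PS: "P (Suc t) = (1 + r t) * P t" if "t \<ge> T1" for t
    unfolding P_def using that by (simp add: prod.atLeastLessThan_Suc mult.commute)
  have main: "u t \<le> P t * (A + (2 * C / \<delta>) * real t powr \<delta>)" if "t \<ge> T1" for t
    using that
  proof (induction t rule: dec_induct)
    case base
    have "0 \<le> (2 * C / \<delta>) * real T1 powr \<delta>" using C d by simp
    then show ?case unfolding P_def A_def by simp
  next
    case (step t)
    have t1: "1 \<le> real t" using step T1 by simp
    have W: "0 \<le> A + (2 * C / \<delta>) * real t powr \<delta>" unfolding A_def using C d by simp
    have "u (Suc t) \<le> (1 + r t) * u t + C * real t powr (\<delta> - 1)" using assms(7) step by simp
    also have "\<dots> \<le> (1 + r t) * (P t * (A + (2 * C / \<delta>) * real t powr \<delta>)) + C * real t powr (\<delta> - 1)"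
      using step.IH r0[of t] by (intro add_right_mono mult_left_mono) (auto intro: add_nonneg_nonneg)
    also have "\<dots> = P (Suc t) * (A + (2 * C / \<delta>) * real t powr \<delta>) + C * real t powr (\<delta> - 1)"
      using PS[OF step(1)] by simp
    also have "C * real t powr (\<delta> - 1) \<le> P (Suc t) * (C * real t powr (\<delta> - 1))"
    proof -
      have "0 \<le> C * real t powr (\<delta> - 1)" using C by simp
      then show ?thesis using P1[of "Suc t"] by (simp add: mult_le_cancel_right1)
    qed
    also have "C * real t powr (\<delta> - 1) \<le> C * ((2 / \<delta>) * ((real t + 1) powr \<delta> - real t powr \<delta>))"
      using powr_incr[OF t1 d] C by (intro mult_left_mono) auto
    finally have "u (Suc t) \<le> P (Suc t) * (A + (2 * C / \<delta>) * real t powr \<delta>) + P (Suc t) * (C * ((2 / \<delta>) * ((real t + 1) powr \<delta> - real t powr \<delta>)))"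
      using P1[of "Suc t"] by (simp add: mult_left_mono)
    also have "\<dots> = P (Suc t) * (A + (2 * C / \<delta>) * real (Suc t) powr \<delta>)"
      by (simp add: algebra_simps add.commute)
    finally show ?case .
  qed
  show ?thesis
  proof (intro exI allI impI)
    fix t assume t: "t \<ge> T1"
    have t1: "1 \<le> real t" using t T1 by simp
    have pw: "1 \<le> real t powr \<delta>" using t1 d by (simp add: ge_one_powr_ge_zero)
    have W: "0 \<le> A + (2 * C / \<delta>) * real t powr \<delta>" unfolding A_def using C d by simp
    have "u t \<le> P t * (A + (2 * C / \<delta>) * real t powr \<delta>)" by (rule main[OF t])
    also have "\<dots> \<le> R * (A + (2 * C / \<delta>) * real t powr \<delta>)" using PR W by (intro mult_right_mono) auto
    also have "A \<le> A * real t powr \<delta>" using pw by (simp add: A_def mult_le_cancel_left1)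
    finally have "u t \<le> R * (A * real t powr \<delta> + (2 * C / \<delta>) * real t powr \<delta>)"
      unfolding R_def by (simp add: mult_left_mono)
    then show "u t \<le> (R * (A + 2 * C / \<delta>)) * real t powr \<delta>" by (simp add: algebra_simps)
  qed
qed

lemma gauss_moments:
  fixes W :: "'a \<Rightarrow> real^'d::finite"
  assumes P: "prob_space M"
    and D: "distributed M lborel W (\<lambda>v. ennreal (\<Prod>j\<in>UNIV. std_normal_density (v $ j)))"
  shows "integrable M (\<lambda>\<omega>. W \<omega> $ i)" "(\<integral>\<omega>. W \<omega> $ i \<partial>M) = 0"
    "integrable M (\<lambda>\<omega>. (W \<omega> $ i)\<^sup>2)" "(\<integral>\<omega>. (W \<omega> $ i)\<^sup>2 \<partial>M) = 1"
proof -
  interpret prob_space M by (rule P)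
  have Di: "distributed M lborel (\<lambda>\<omega>. W \<omega> $ i) (\<lambda>x. ennreal (std_normal_density x))"
    by (rule gauss_marginal[OF D])
  show "integrable M (\<lambda>\<omega>. W \<omega> $ i)"
    using distributed_integrable[OF Di, of "\<lambda>x. x"] integrable_std_normal_moment[of 1] by simp
  show "(\<integral>\<omega>. W \<omega> $ i \<partial>M) = 0"
    by (rule standard_normal_distributed_expectation[OF Di])
  show "integrable M (\<lambda>\<omega>. (W \<omega> $ i)\<^sup>2)"
    using distributed_integrable[OF Di, of "\<lambda>x. x\<^sup>2"] integrable_std_normal_moment[of 2] by simp
  have "(\<integral>x. std_normal_density x * x\<^sup>2 \<partial>lborel) = (\<integral>\<omega>. (W \<omega> $ i)\<^sup>2 \<partial>M)"
    using distributed_integral[OF Di, of "\<lambda>x. x\<^sup>2"] by simp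
  moreover have "(\<integral>x. std_normal_density x * x\<^sup>2 \<partial>lborel) = 1"
    using integral_std_normal_moment_even[of 1] by simp
  ultimately show "(\<integral>\<omega>. (W \<omega> $ i)\<^sup>2 \<partial>M) = 1" by simp
qed

lemma indep_zero:
  fixes W :: "'a \<Rightarrow> real^'d::finite" and h :: "'a \<Rightarrow> real"
  assumes P: "prob_space M"
    and I: "prob_space.indep_set M (sets Ft) {W -` A \<inter> space M | A. A \<in> sets (borel :: (real^'d) measure)}"
    and Wm: "W \<in> borel_measurable M"
    and hF: "h \<in> borel_measurable Ft" and sF: "space Ft = space M"
    and hM: "h \<in> borel_measurable M"
    and hi: "integrable M h" and Wi: "integrable M (\<lambda>\<omega>. W \<omega> $ i)" and W0: "(\<integral>\<omega>. W \<omega> $ i \<partial>M) = 0"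
  shows "integrable M (\<lambda>\<omega>. h \<omega> * W \<omega> $ i)" "(\<integral>\<omega>. h \<omega> * W \<omega> $ i \<partial>M) = 0"
proof -
  interpret prob_space M by (rule P)
  have Wim: "(\<lambda>\<omega>. W \<omega> $ i) \<in> borel_measurable M" by (rule meas_vec_nth'[OF Wm])
  have ev: "sets Ft \<subseteq> events" "{W -` A \<inter> space M | A. A \<in> sets (borel :: (real^'d) measure)} \<subseteq> events"
    using I by (auto simp: indep_sets2_eq)
  have pr: "\<forall>a\<in>sets Ft. \<forall>b\<in>{W -` A \<inter> space M | A. A \<in> sets (borel :: (real^'d) measure)}. prob (a \<inter> b) = prob a * prob b"
    using I by (simp add: indep_sets2_eq)
  have H: "sigma_sets (space M) {h -` A \<inter> space M | A. A \<in> sets borel} \<subseteq> sets Ft"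
  proof -
    have "{h -` A \<inter> space M | A. A \<in> sets borel} \<subseteq> sets Ft"
      using hF sF by (auto simp: measurable_def)
    then show ?thesis using sets.sigma_sets_subset[of _ Ft] sF by simp
  qed
  have "sigma_sets (space M) {(\<lambda>\<omega>. W \<omega> $ i) -` A \<inter> space M | A. A \<in> sets borel}
      = {(\<lambda>\<omega>. W \<omega> $ i) -` A \<inter> space M | A. A \<in> sigma_sets UNIV (sets borel)}"
    by (rule sigma_sets_vimage_commute[symmetric]) simp
  also have "\<dots> = {(\<lambda>\<omega>. W \<omega> $ i) -` A \<inter> space M | A. A \<in> sets borel}"
    using sets.sigma_sets_eq[of "borel :: real measure"] by simp
  also have "\<dots> \<subseteq> {W -` A \<inter> space M | A. A \<in> sets (borel :: (real^'d) measure)}"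
  proof
    fix S assume "S \<in> {(\<lambda>\<omega>. W \<omega> $ i) -` A \<inter> space M | A. A \<in> sets borel}"
    then obtain A where A: "A \<in> sets borel" "S = (\<lambda>\<omega>. W \<omega> $ i) -` A \<inter> space M" by auto
    have "{v :: real^'d. v $ i \<in> A} \<in> sets borel"
      using measurable_sets[OF meas_vec_nth A(1)] by (simp add: vimage_def)
    moreover have "S = W -` {v. v $ i \<in> A} \<inter> space M" using A by auto
    ultimately show "S \<in> {W -` A \<inter> space M | A. A \<in> sets (borel :: (real^'d) measure)}" by blast
  qed
  finally have WS: "sigma_sets (space M) {(\<lambda>\<omega>. W \<omega> $ i) -` A \<inter> space M | A. A \<in> sets borel}
      \<subseteq> {W -` A \<inter> space M | A. A \<in> sets (borel :: (real^'d) measure)}" .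
  have "indep_var borel h borel (\<lambda>\<omega>. W \<omega> $ i)"
    unfolding indep_var_eq
  proof (intro conjI)
    show "random_variable borel h" using hM by simp
    show "random_variable borel (\<lambda>\<omega>. W \<omega> $ i)" using Wim by simp
    show "indep_set (sigma_sets (space M) {h -` A \<inter> space M |A. A \<in> sets borel})
        (sigma_sets (space M) {(\<lambda>\<omega>. W \<omega> $ i) -` A \<inter> space M |A. A \<in> sets borel})"
      unfolding indep_sets2_eq
    proof (intro conjI ballI)
      show "sigma_sets (space M) {h -` A \<inter> space M |A. A \<in> sets borel} \<subseteq> events"
        using H ev(1) by (rule order_trans)
      show "sigma_sets (space M) {(\<lambda>\<omega>. W \<omega> $ i) -` A \<inter> space M |A. A \<in> sets borel} \<subseteq> events"
        using WS ev(2) by (rule order_trans)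
      fix a b assume a: "a \<in> sigma_sets (space M) {h -` A \<inter> space M |A. A \<in> sets borel}"
        and b: "b \<in> sigma_sets (space M) {(\<lambda>\<omega>. W \<omega> $ i) -` A \<inter> space M |A. A \<in> sets borel}"
      have "a \<in> sets Ft" using a H by (rule subsetD[rotated])
      moreover have "b \<in> {W -` A \<inter> space M | A. A \<in> sets (borel :: (real^'d) measure)}" using b WS by (rule subsetD[rotated])
      ultimately show "prob (a \<inter> b) = prob a * prob b" using pr by blast
    qed
  qed
  then show "integrable M (\<lambda>\<omega>. h \<omega> * W \<omega> $ i)" "(\<integral>\<omega>. h \<omega> * W \<omega> $ i \<partial>M) = 0"
    using indep_var_integrable[of h "\<lambda>\<omega>. W \<omega> $ i"] indep_var_lebesgue_integral[of h "\<lambda>\<omega>. W \<omega> $ i"] hi Wi W0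
    by simp_all
qed

lemma norm3: "(norm (a - b - c))\<^sup>2 \<le> 3 * ((norm a)\<^sup>2 + (norm b)\<^sup>2 + (norm c)\<^sup>2)" for a b c :: "'a::real_normed_vector"
proof -
  have h: "norm (a - b - c) \<le> norm a + norm b + norm c"
    using norm_triangle_ineq4[of "a - b" c] norm_triangle_ineq4[of a b] by linarith
  have "(norm (a - b - c))\<^sup>2 \<le> (norm a + norm b + norm c)\<^sup>2" using h by (intro power_mono) auto
  also have "\<dots> \<le> 3 * ((norm a)\<^sup>2 + (norm b)\<^sup>2 + (norm c)\<^sup>2)"
  proof -
    have "0 \<le> (norm a - norm b)\<^sup>2 + (norm b - norm c)\<^sup>2 + (norm a - norm c)\<^sup>2" by simp
    moreover have "(norm a + norm b + norm c)\<^sup>2 + ((norm a - norm b)\<^sup>2 + (norm b - norm c)\<^sup>2 + (norm a - norm c)\<^sup>2) = 3 * ((norm a)\<^sup>2 + (norm b)\<^sup>2 + (norm c)\<^sup>2)"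
      by (simp add: power2_eq_square algebra_simps)
    ultimately show ?thesis by linarith
  qed
  finally show ?thesis .
qed

lemma young_eps: "2 * P * Q \<le> e * P\<^sup>2 + (1/e) * Q\<^sup>2" if "e > 0" for P Q e :: real
proof -
  have "0 \<le> (e * P - Q)\<^sup>2" by simp
  also have "\<dots> = e * (e * P\<^sup>2 + (1/e) * Q\<^sup>2 - 2 * P * Q)"
    using that by (simp add: power2_eq_square field_simps)
  finally have "0 \<le> e * (e * P\<^sup>2 + (1/e) * Q\<^sup>2 - 2 * P * Q)" .
  then have "0 \<le> e * P\<^sup>2 + (1/e) * Q\<^sup>2 - 2 * P * Q" using that by (simp add: zero_le_mult_iff)
  then show ?thesis by simp
qed

lemma norm_eps: "(norm (p - q))\<^sup>2 \<le> (1 + e) * (norm p)\<^sup>2 + (1 + 1/e) * (norm q)\<^sup>2" if "e > 0" for p q :: "'a::real_normed_vector"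
proof -
  have "(norm (p - q))\<^sup>2 \<le> (norm p + norm q)\<^sup>2" using norm_triangle_ineq4[of p q] by (intro power_mono) auto
  also have "\<dots> = (norm p)\<^sup>2 + 2 * norm p * norm q + (norm q)\<^sup>2" by (simp add: power2_eq_square algebra_simps)
  finally show ?thesis using young_eps[OF that, of "norm p" "norm q"] by (simp add: algebra_simps)
qed

lemma norm_sq_add: "(norm (p + c *\<^sub>R q))\<^sup>2 = (norm p)\<^sup>2 + 2 * c * (p \<bullet> q) + c\<^sup>2 * (norm q)\<^sup>2" for p q :: "'a::real_inner"
  using nd[of p "-c" q] by simp

lemma inner_vec2: "(a::real^'d^'n) \<bullet> b = (\<Sum>n\<in>UNIV. \<Sum>i\<in>UNIV. a $ n $ i * b $ n $ i)"
  by (simp add: inner_vec_def)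

lemma le_one_plus_sq: "y \<le> 1 + y\<^sup>2" for y :: real
proof -
  have "0 \<le> (y - 1/2)\<^sup>2" by simp
  then show ?thesis by (simp add: power2_eq_square algebra_simps)
qed

lemma asym:
  fixes tt ca cb cg tau del NN K Cg G2 B Nd lnl al be ga ep aa bb :: real
  assumes tt: "1 \<le> tt" and d: "0 < del" "del \<le> tau" "del < 1"
    and c: "0 < ca" "0 < cb" and NN: "0 \<le> NN" and K: "0 \<le> K" and lnl: "1 \<le> lnl"
    and Cg: "0 \<le> Cg" and G2: "0 \<le> G2" and B: "0 < B" and Nd: "0 \<le> Nd"
    and al_def: "al = ca / tt" and be_def: "be = cb / tt powr tau" and ga_def: "ga = cg / (sqrt tt * sqrt lnl)"
    and ep_def: "ep = tt powr -(1+del)"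
    and aa_def: "aa = 2*al*be*NN + (2*al*be*NN + al\<^sup>2) * (2 * K\<^sup>2)"
    and bb_def: "bb = 2*al*Cg + (2*al*be*NN + al\<^sup>2) * G2"
  shows "0 < ep" "0 \<le> ep + aa + ep * aa"
    "ep + aa + ep * aa \<le> (1 + 2 * (2*ca*cb*NN + (2*ca*cb*NN + ca\<^sup>2) * (2 * K\<^sup>2))) * tt powr -(1+del)"
    "(1 + ep) * (bb + ga\<^sup>2 * Nd) + (1 + 1/ep) * (al\<^sup>2 * B)
       \<le> (2 * (2*ca*Cg + (2*ca*cb*NN + ca\<^sup>2) * G2 + cg\<^sup>2 * Nd) + 2 * B * ca\<^sup>2) * tt powr (del - 1)"
proof -
  have tt0: "0 < tt" using tt by simp
  define p where "p = tt powr -(1+del)"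
  define q where "q = tt powr (del - 1)"
  have p0: "0 < p" unfolding p_def using tt0 by simp
  have p1: "p \<le> 1" unfolding p_def using tt d powr_mono[of "-(1+del)" 0 tt] by simp
  have e1: "1 / tt = tt powr (-1)" using tt0 by (simp add: powr_minus divide_inverse)
  have e2: "1 / tt^2 = tt powr (-2)" using tt0 by (simp add: powr_minus divide_inverse powr_realpow)
  have etau: "1 / (tt * tt powr tau) = tt powr (-(1+tau))"
  proof -
    have "tt powr (-(1+tau)) = tt powr ((-1) + (-tau))" by simp
    also have "\<dots> = tt powr (-1) * tt powr (-tau)" by (rule powr_add)
    finally have "tt powr (-(1+tau)) = tt powr (-1) * tt powr (-tau)" .
    then show ?thesis using tt0 by (simp add: powr_minus divide_inverse)
  qed
  have i2: "1 / tt^2 \<le> p" unfolding e2 p_def using tt d by (intro powr_mono) auto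
  have itau: "1 / (tt * tt powr tau) \<le> p" unfolding etau p_def using tt d by (intro powr_mono) auto
  have i1: "1 / tt \<le> q" unfolding e1 q_def using tt d by (intro powr_mono) auto
  have i2b: "1 / tt^2 \<le> 1 / tt" using tt by (simp add: divide_le_cancel power2_eq_square) (simp add: field_simps)
  have taupos: "1 \<le> tt powr tau" using tt d by (simp add: ge_one_powr_ge_zero)
  have itaub: "1 / (tt * tt powr tau) \<le> 1 / tt" using tt0 taupos by (simp add: divide_le_cancel field_simps)
  have al0: "0 \<le> al" unfolding al_def using c tt0 by simp
  have be0: "0 \<le> be" unfolding be_def using c tt0 by simp
  have alsq: "al\<^sup>2 = ca\<^sup>2 * (1 / tt^2)" unfolding al_def by (simp add: power_divide)
  have albe: "al * be = ca * cb * (1 / (tt * tt powr tau))" unfolding al_def be_def by simp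
  have ep_p: "ep = p" unfolding ep_def p_def ..
  show "0 < ep" using p0 ep_p by simp
  define Da where "Da = 2*ca*cb*NN + (2*ca*cb*NN + ca\<^sup>2) * (2 * K\<^sup>2)"
  have Da0: "0 \<le> Da" unfolding Da_def using c NN by simp
  have aa0: "0 \<le> aa" unfolding aa_def using al0 be0 NN by simp
  have albep: "al * be \<le> ca * cb * p" unfolding albe using mult_left_mono[OF itau, of "ca*cb"] c by simp
  have alsqp: "al\<^sup>2 \<le> ca\<^sup>2 * p" unfolding alsq using mult_left_mono[OF i2, of "ca^2"] by simp
  have aap: "aa \<le> Da * p"
  proof -
    have "(al*be)*NN \<le> (ca*cb*p)*NN" using albep NN by (rule mult_right_mono)
    then have h1: "2*al*be*NN \<le> 2*ca*cb*p*NN" by (simp add: mult.assoc)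
    have h2: "(2*al*be*NN + al\<^sup>2) * (2 * K\<^sup>2) \<le> (2*ca*cb*p*NN + ca\<^sup>2*p) * (2 * K\<^sup>2)"
      using h1 alsqp by (intro mult_right_mono) auto
    show ?thesis unfolding aa_def Da_def using h1 h2 by (simp add: algebra_simps)
  qed
  show "0 \<le> ep + aa + ep * aa" using p0 aa0 ep_p by simp
  have "ep * aa \<le> 1 * aa" using p1 aa0 ep_p by (intro mult_right_mono) auto
  then have "ep * aa \<le> aa" by simp
  then show "ep + aa + ep * aa \<le> (1 + 2 * (2*ca*cb*NN + (2*ca*cb*NN + ca\<^sup>2) * (2 * K\<^sup>2))) * tt powr -(1+del)"
    using aap ep_p unfolding Da_def[symmetric] p_def[symmetric] by (simp add: algebra_simps)
  define Db where "Db = 2*ca*Cg + (2*ca*cb*NN + ca\<^sup>2) * G2 + cg\<^sup>2 * Nd"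
  have bb_le: "bb + ga\<^sup>2 * Nd \<le> Db * (1/tt)"
  proof -
    have alt: "al = ca * (1/tt)" unfolding al_def by simp
    have h1: "al * be \<le> ca * cb * (1/tt)" unfolding albe using mult_left_mono[OF itaub, of "ca*cb"] c by simp
    have h2: "al\<^sup>2 \<le> ca\<^sup>2 * (1/tt)" unfolding alsq using mult_left_mono[OF i2b, of "ca^2"] by simp
    have h3: "ga\<^sup>2 \<le> cg\<^sup>2 * (1/tt)"
    proof -
      have "ga\<^sup>2 = cg\<^sup>2 / (tt * lnl)" unfolding ga_def using tt0 lnl by (simp add: power_divide power_mult_distrib)
      also have "\<dots> \<le> cg\<^sup>2 / tt" using tt0 lnl by (intro divide_left_mono) (auto simp: mult_le_cancel_left1)
      finally show ?thesis by simp
    qed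
    have "bb = 2*Cg*al + 2*G2*NN*(al*be) + G2 * al\<^sup>2" unfolding bb_def by (simp add: algebra_simps)
    also have "\<dots> \<le> 2*Cg*(ca*(1/tt)) + 2*G2*NN*(ca * cb * (1/tt)) + G2 * (ca\<^sup>2 * (1/tt))"
      using h1 h2 Cg G2 NN c unfolding alt by (intro add_mono mult_left_mono) auto
    finally have "bb \<le> 2*Cg*(ca*(1/tt)) + 2*G2*NN*(ca * cb * (1/tt)) + G2 * (ca\<^sup>2 * (1/tt))" .
    moreover have "ga\<^sup>2 * Nd \<le> cg\<^sup>2 * (1/tt) * Nd" using h3 Nd by (rule mult_right_mono)
    ultimately show ?thesis unfolding Db_def by (simp add: algebra_simps)
  qed
  have Db0: "0 \<le> Db" unfolding Db_def using c Cg G2 NN Nd by simp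
  have s1: "(1 + ep) * (bb + ga\<^sup>2 * Nd) \<le> 2 * (Db * q)"
  proof -
    have "0 \<le> bb + ga\<^sup>2 * Nd" unfolding bb_def using al0 be0 Cg G2 NN Nd by simp
    then have "(1 + ep) * (bb + ga\<^sup>2 * Nd) \<le> 2 * (bb + ga\<^sup>2 * Nd)" using p1 ep_p by (intro mult_right_mono) auto
    also have "\<dots> \<le> 2 * (Db * q)" using bb_le i1 Db0 by (smt (verit) mult_left_mono)
    finally show ?thesis .
  qed
  have s2: "(1 + 1/ep) * (al\<^sup>2 * B) \<le> 2 * B * ca\<^sup>2 * q"
  proof -
    have "1 \<le> 1/ep" using p0 p1 ep_p by simp
    then have "(1 + 1/ep) * (al\<^sup>2 * B) \<le> (2/ep) * (al\<^sup>2 * B)" using B by (intro mult_right_mono) auto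
    also have "(2/ep) * (al\<^sup>2 * B) = 2 * B * ca\<^sup>2 * (tt powr (1+del) / tt^2)"
    proof -
      have iv: "1 / tt powr (-(1+del)) = tt powr (1+del)" by (simp only: powr_minus inverse_inverse_eq divide_inverse mult_1_left)
      show ?thesis unfolding ep_def alsq using iv by (simp add: divide_inverse)
    qed
    also have "tt powr (1+del) / tt^2 = q"
    proof -
      have "tt^2 = tt powr 2" using tt0 by (simp add: powr_numeral)
      then have "tt powr (1+del) / tt^2 = tt powr (1+del) / tt powr 2" by simp
      also have "\<dots> = tt powr (1+del-2)" by (rule powr_diff[symmetric])
      also have "1+del-2 = del - 1" by simp
      finally show ?thesis unfolding q_def .
    qed
    finally show ?thesis by simp
  qed
  show "(1 + ep) * (bb + ga\<^sup>2 * Nd) + (1 + 1/ep) * (al\<^sup>2 * B)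
       \<le> (2 * (2*ca*Cg + (2*ca*cb*NN + ca\<^sup>2) * G2 + cg\<^sup>2 * Nd) + 2 * B * ca\<^sup>2) * tt powr (del - 1)"
    using s1 s2 unfolding Db_def[symmetric] q_def[symmetric] by (simp add: algebra_simps)
qed


theorem lemma2:
  fixes U :: "'n::finite \<Rightarrow> real^'d \<Rightarrow> real"
    and g :: "'n \<Rightarrow> real^'d \<Rightarrow> real^'d"
    and H :: "'n \<Rightarrow> real^'d \<Rightarrow> real^'d^'d"
    and K C1 B c\<alpha> c\<beta> c\<gamma> \<tau>\<beta> :: real
    and E :: "'n \<Rightarrow> 'n \<Rightarrow> bool"
    and M :: "'a measure"
    and x \<xi> w :: "nat \<Rightarrow> 'a \<Rightarrow> real^'d^'n"
    and \<alpha> \<beta> \<gamma> :: "nat \<Rightarrow> real"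
  defines "Utot \<equiv> (\<lambda>y. \<Sum>n\<in>UNIV. U n y)"
    and "gradU \<equiv> (\<lambda>y. \<Sum>n\<in>UNIV. g n y)"
    and "lapU \<equiv> (\<lambda>y. \<Sum>n\<in>UNIV. \<Sum>i\<in>UNIV. H n y $ i $ i)"
    and "F \<equiv> nat_filtration M x \<xi> w"
  assumes A1_grad: "\<And>n y. (U n has_derivative (\<lambda>h. g n y \<bullet> h)) (at y)"
    and A1_hess: "\<And>n y. (g n has_derivative (\<lambda>h. H n y *v h)) (at y)"
    and A1_C2: "\<And>n. continuous_on UNIV (H n)"
    and A1_K: "K > 0" and A1_lip: "\<And>n. K-lipschitz_on UNIV (g n)"
    and A2_coercive: "\<And>n. filterlim (U n) at_top at_infinity"
    and A2_C1: "C1 > 0" and A2: "\<And>n y. norm y \<ge> C1 \<Longrightarrow> y \<bullet> g n y \<ge> 0"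
    and A3_min: "(\<exists>y. Utot y = 0) \<and> (\<forall>y. Utot y \<ge> 0)"
    and A3_bdd: "bdd_below (range (\<lambda>y. (norm (gradU y))\<^sup>2 - lapU y))"
    and A4: "gibbs_weak_limit_exists Utot"
    and A5_angle: "Liminf at_infinity
          (\<lambda>y. ereal ((gradU y /\<^sub>R norm (gradU y)) \<bullet> (y /\<^sub>R norm y)))
        \<ge> ereal (sqrt ((4 * real CARD('d) - 4) / (4 * real CARD('d) - 3)))"
    and A5_lower: "Liminf at_infinity (\<lambda>y. ereal (norm (gradU y) / norm y)) > 0"
    and A5_upper: "Limsup at_infinity (\<lambda>y. ereal (norm (gradU y) / norm y)) < \<infinity>"
    and G_undirected: "undirected_graph E" and G_connected: "connected_graph E"
    and prob: "prob_space M"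
    and meas_xi: "\<And>t. \<xi> t \<in> borel_measurable M"
    and meas_w: "\<And>t. w t \<in> borel_measurable M"
    and x1_det: "\<exists>x1. \<forall>\<omega>\<in>space M. x 1 \<omega> = x1"
    and recursion: "\<And>t \<omega>. t \<ge> 1 \<Longrightarrow> \<omega> \<in> space M \<Longrightarrow>
        x (Suc t) \<omega> = x t \<omega> - \<beta> t *\<^sub>R kron_lap (graph_laplacian E) (x t \<omega>)
          - \<alpha> t *\<^sub>R ((\<chi> n. g n (x t \<omega> $ n)) + \<xi> t \<omega>) + \<gamma> t *\<^sub>R w t \<omega>"
    and A6_adapted: "\<And>t. t \<ge> 1 \<Longrightarrow> \<xi> t \<in> borel_measurable (F (Suc t))"
    and A6_mean: "\<And>t n i. t \<ge> 1 \<Longrightarrow>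
        AE \<omega> in M. real_cond_exp M (F t) (\<lambda>\<omega>. \<xi> t \<omega> $ n $ i) \<omega> = 0"
    and A6_B: "B > 0"
    and A6_var: "\<And>t. t \<ge> 1 \<Longrightarrow>
        AE \<omega> in M. nn_cond_exp M (F t) (\<lambda>\<omega>. ennreal ((norm (\<xi> t \<omega>))\<^sup>2)) \<omega> < ennreal B"
    and A7_gauss: "\<And>t n. t \<ge> 1 \<Longrightarrow> distributed M lborel (\<lambda>\<omega>. w t \<omega> $ n)
        (\<lambda>v. ennreal (\<Prod>i\<in>UNIV. std_normal_density (v $ i)))"
    and A7_indep: "prob_space.indep_vars M (\<lambda>_. borel) (\<lambda>(n, t) \<omega>. w t \<omega> $ n)
        (UNIV \<times> {1..})"
    and A7_indep_past: "\<And>t n. t \<ge> 1 \<Longrightarrow> prob_space.indep_set M (sets (F t))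
        {(\<lambda>\<omega>. w t \<omega> $ n) -` A \<inter> space M | A. A \<in> sets (borel :: (real^'d) measure)}"
    and A8_c: "c\<alpha> > 0" "c\<beta> > 0" "c\<gamma> > 0" and A8_tau: "0 < \<tau>\<beta>" "\<tau>\<beta> < 1/2"
    and A8: "\<exists>T. \<forall>t\<ge>T. \<alpha> t = c\<alpha> / real t \<and> \<beta> t = c\<beta> / real t powr \<tau>\<beta> \<and>
        \<gamma> t = c\<gamma> / (sqrt (real t) * sqrt (ln (ln (real t))))"
  shows "\<forall>\<eta>>1/2. AE \<omega> in M. bdd_above ((\<lambda>t. norm (x t \<omega>) / real t powr \<eta>) ` {1..})"
proof -
  interpret P: prob_space M by (rule prob)
  define N where "N = real CARD('n)"
  define dd where "dd = real CARD('d)"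
  define LL where "LL = graph_laplacian E"
  define Y where "Y t X = X - \<beta> t *\<^sub>R kron_lap LL X - \<alpha> t *\<^sub>R ghat g X" for t X
  define V where "V t \<omega> = (norm (x t \<omega>))\<^sup>2" for t \<omega>
  define G2 where "G2 = (\<Sum>n\<in>UNIV. 2 * (norm (g n 0))\<^sup>2)"
  define Cg where "Cg = (\<Sum>n\<in>UNIV. C1 * (norm (g n 0) + K * C1))"
  have N1: "1 \<le> N" unfolding N_def by simp
  have G20: "0 \<le> G2" unfolding G2_def by (auto intro: sum_nonneg)
  have Cg0: "0 \<le> Cg" unfolding Cg_def using A2_C1 A1_K by (auto intro!: sum_nonneg)
  have rec': "x (Suc t) \<omega> = Y t (x t \<omega>) - \<alpha> t *\<^sub>R \<xi> t \<omega> + \<gamma> t *\<^sub>R w t \<omega>"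
    if "t \<ge> 1" "\<omega> \<in> space M" for t \<omega>
    using recursion[OF that] unfolding Y_def LL_def ghat_def by (simp add: scaleR_add_right algebra_simps)
  have gc: "continuous_on UNIV (g n)" for n using A1_lip[of n] by (rule lipschitz_on_continuous_on)
  have ghc: "continuous_on UNIV (ghat g)"
    unfolding ghat_def
    by (intro continuous_on_vec_lambda continuous_on_compose2[OF gc, of UNIV]) (auto intro: continuous_intros)
  have Lc: "continuous_on UNIV (kron_lap LL)"
    unfolding kron_lap_def by (intro continuous_intros)
  have Yc: "continuous_on UNIV (Y t)" for t
    unfolding Y_def by (intro continuous_intros Lc ghc)
  have Ym[measurable]: "Y t \<in> borel_measurable borel" for t by (rule borel_measurable_continuous_onI[OF Yc])
  have xim[measurable]: "\<xi> t \<in> borel_measurable M" for t by (rule meas_xi)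
  have wm[measurable]: "w t \<in> borel_measurable M" for t by (rule meas_w)
  have xm[measurable]: "x t \<in> borel_measurable M" if "t \<ge> 1" for t
    using that
  proof (induction t rule: dec_induct)
    case base
    obtain x1 where "\<forall>\<omega>\<in>space M. x 1 \<omega> = x1" using x1_det by blast
    then show ?case by (subst measurable_cong[where g="\<lambda>_. x1"]) auto
  next
    case (step t)
    have "(\<lambda>\<omega>. Y t (x t \<omega>) - \<alpha> t *\<^sub>R \<xi> t \<omega> + \<gamma> t *\<^sub>R w t \<omega>) \<in> borel_measurable M"
      using step.IH by measurable
    then show ?case using rec'[OF step(1)] by (subst measurable_cong) auto
  qed
  define Gs where "Gs t = {x s -` A \<inter> space M | s A. 1 \<le> s \<and> s \<le> t \<and> A \<in> sets (borel :: (real^'d^'n) measure)} \<union>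
      {\<xi> s -` A \<inter> space M | s A. 1 \<le> s \<and> s < t \<and> A \<in> sets (borel :: (real^'d^'n) measure)} \<union>
      {w s -` A \<inter> space M | s A. 1 \<le> s \<and> s < t \<and> A \<in> sets (borel :: (real^'d^'n) measure)}" for t
  have FG: "F t = sigma (space M) (Gs t)" for t by (simp add: F_def nat_filtration_def Gs_def)
  have Gsub: "Gs t \<subseteq> sets M" for t
    unfolding Gs_def using xm by (auto intro!: measurable_sets)
  have GP: "Gs t \<subseteq> Pow (space M)" for t using Gsub[of t] sets.space_closed[of M] by blast
  have spF: "space (F t) = space M" for t unfolding FG using GP[of t] by simp
  have setsF: "sets (F t) = sigma_sets (space M) (Gs t)" for t unfolding FG using GP[of t] by simp
  have subF: "sets (F t) \<subseteq> sets M" for t unfolding setsF by (rule sets.sigma_sets_subset[OF Gsub])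
  have xF: "x t \<in> borel_measurable (F t)" if "t \<ge> 1" for t
  proof (rule measurableI)
    fix A :: "(real^'d^'n) set" assume "A \<in> sets borel"
    then have "x t -` A \<inter> space M \<in> {x s -` A \<inter> space M | s A. 1 \<le> s \<and> s \<le> t \<and> A \<in> sets (borel :: (real^'d^'n) measure)}"
      using that by (intro CollectI exI[of _ t] exI[of _ A]) simp
    then have "x t -` A \<inter> space M \<in> Gs t" unfolding Gs_def by (intro UnI1)
    then show "x t -` A \<inter> space (F t) \<in> sets (F t)" unfolding setsF spF by blast
  qed simp
  have sfs: "sigma_finite_subalgebra M (F t)" for t
  proof -
    have "finite_measure_subalgebra M (F t)"
      by (intro finite_measure_subalgebra.intro finite_measure_subalgebra_axioms.intro P.finite_measure_axioms) (simp add: subalgebra_def subF spF)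
    then show ?thesis by (rule finite_measure_subalgebra_is_sigma_finite)
  qed
  have xiN: "(\<integral>\<^sup>+\<omega>. ennreal ((norm (\<xi> t \<omega>))\<^sup>2) \<partial>M) \<le> ennreal B" if "t \<ge> 1" for t
  proof -
    interpret S: sigma_finite_subalgebra M "F t" by (rule sfs)
    have "(\<integral>\<^sup>+\<omega>. ennreal ((norm (\<xi> t \<omega>))\<^sup>2) \<partial>M) = (\<integral>\<^sup>+\<omega>. 1 * nn_cond_exp M (F t) (\<lambda>\<omega>. ennreal ((norm (\<xi> t \<omega>))\<^sup>2)) \<omega> \<partial>M)"
      using S.nn_cond_exp_intg[of "\<lambda>_. 1" "\<lambda>\<omega>. ennreal ((norm (\<xi> t \<omega>))\<^sup>2)"] by simp
    also have "\<dots> \<le> (\<integral>\<^sup>+\<omega>. ennreal B \<partial>M)"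
    proof (rule nn_integral_mono_AE)
      show "AE \<omega> in M. 1 * nn_cond_exp M (F t) (\<lambda>\<omega>. ennreal ((norm (\<xi> t \<omega>))\<^sup>2)) \<omega> \<le> ennreal B"
        using A6_var[OF that] by eventually_elim simp
    qed
    also have "\<dots> = ennreal B" using P.emeasure_space_1 by simp
    finally show ?thesis .
  qed
  have xiI: "integrable M (\<lambda>\<omega>. (norm (\<xi> t \<omega>))\<^sup>2)" if "t \<ge> 1" for t
  proof (rule integrableI_bounded)
    show "(\<lambda>\<omega>. (norm (\<xi> t \<omega>))\<^sup>2) \<in> borel_measurable M" by measurable
    have "(\<integral>\<^sup>+\<omega>. ennreal (norm ((norm (\<xi> t \<omega>))\<^sup>2)) \<partial>M) = (\<integral>\<^sup>+\<omega>. ennreal ((norm (\<xi> t \<omega>))\<^sup>2) \<partial>M)" by simp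
    also have "\<dots> \<le> ennreal B" by (rule xiN[OF that])
    also have "\<dots> < \<infinity>" by simp
    finally show "(\<integral>\<^sup>+\<omega>. ennreal (norm ((norm (\<xi> t \<omega>))\<^sup>2)) \<partial>M) < \<infinity>" .
  qed
  have xiE: "(\<integral>\<omega>. (norm (\<xi> t \<omega>))\<^sup>2 \<partial>M) \<le> B" if "t \<ge> 1" for t
  proof -
    have "ennreal (\<integral>\<omega>. (norm (\<xi> t \<omega>))\<^sup>2 \<partial>M) = (\<integral>\<^sup>+\<omega>. ennreal ((norm (\<xi> t \<omega>))\<^sup>2) \<partial>M)"
      by (rule nn_integral_eq_integral[symmetric]) (auto intro: xiI[OF that])
    also have "\<dots> \<le> ennreal B" by (rule xiN[OF that])
    finally show ?thesis using A6_B by (simp add: ennreal_le_iff)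
  qed
  have wmom: "integrable M (\<lambda>\<omega>. w t \<omega> $ n $ i) \<and> (\<integral>\<omega>. w t \<omega> $ n $ i \<partial>M) = 0 \<and>
      integrable M (\<lambda>\<omega>. (w t \<omega> $ n $ i)\<^sup>2) \<and> (\<integral>\<omega>. (w t \<omega> $ n $ i)\<^sup>2 \<partial>M) = 1" if "t \<ge> 1" for t n i
    using gauss_moments[OF prob A7_gauss[OF that, of n], of i] by simp
  have wsq: "(norm (w t \<omega>))\<^sup>2 = (\<Sum>n\<in>UNIV. \<Sum>i\<in>UNIV. (w t \<omega> $ n $ i)\<^sup>2)" for t \<omega>
    by (simp add: norm_vec_sq)
  have wI: "integrable M (\<lambda>\<omega>. (norm (w t \<omega>))\<^sup>2)" if "t \<ge> 1" for t
    unfolding wsq by (intro Bochner_Integration.integrable_sum) (use wmom[OF that] in auto)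
  have wE: "(\<integral>\<omega>. (norm (w t \<omega>))\<^sup>2 \<partial>M) = N * dd" if "t \<ge> 1" for t
  proof -
    have "(\<integral>\<omega>. (norm (w t \<omega>))\<^sup>2 \<partial>M) = (\<Sum>n\<in>UNIV. \<Sum>i\<in>UNIV. (\<integral>\<omega>. (w t \<omega> $ n $ i)\<^sup>2 \<partial>M))"
      unfolding wsq
      by (subst Bochner_Integration.integral_sum) (use wmom[OF that] in \<open>auto intro!: Bochner_Integration.integrable_sum sum.cong Bochner_Integration.integral_sum\<close>)
    also have "\<dots> = N * dd" using wmom[OF that] by (simp add: N_def dd_def)
    finally show ?thesis .
  qed
  define cY where "cY t = 3 + 12 * (\<beta> t)\<^sup>2 * N\<^sup>2 + 6 * (\<alpha> t)\<^sup>2 * K\<^sup>2" for t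
  define dY where "dY t = 3 * (\<alpha> t)\<^sup>2 * G2" for t
  have Ycrude: "(norm (Y t X))\<^sup>2 \<le> cY t * (norm X)\<^sup>2 + dY t" for t X
  proof -
    have "(norm (Y t X))\<^sup>2 \<le> 3 * ((norm X)\<^sup>2 + (norm (\<beta> t *\<^sub>R kron_lap LL X))\<^sup>2 + (norm (\<alpha> t *\<^sub>R ghat g X))\<^sup>2)"
      unfolding Y_def by (rule norm3)
    also have "(norm (\<beta> t *\<^sub>R kron_lap LL X))\<^sup>2 \<le> (\<beta> t)\<^sup>2 * (4 * N\<^sup>2 * (norm X)\<^sup>2)"
    proof -
      have "norm (kron_lap LL X) \<le> 2 * N * norm X" unfolding LL_def N_def by (rule lap_bound[OF G_undirected])
      then have "(norm (kron_lap LL X))\<^sup>2 \<le> (2 * N * norm X)\<^sup>2" by (intro power_mono) auto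
      then show ?thesis by (simp add: power_mult_distrib mult_left_mono)
    qed
    also have "(norm (\<alpha> t *\<^sub>R ghat g X))\<^sup>2 \<le> (\<alpha> t)\<^sup>2 * (G2 + 2 * K\<^sup>2 * (norm X)\<^sup>2)"
      unfolding G2_def using ghat_norm[OF A1_lip, where X = X] by (simp add: power_mult_distrib mult_left_mono)
    finally show ?thesis unfolding cY_def dY_def by (simp add: algebra_simps)
  qed
  have cY0: "0 \<le> cY t" for t unfolding cY_def by simp
  have dY0: "0 \<le> dY t" for t unfolding dY_def using G20 by simp
  have VI: "integrable M (V t)" if "t \<ge> 1" for t
    using that
  proof (induction t rule: dec_induct)
    case base
    obtain x1 where x1: "\<forall>\<omega>\<in>space M. x 1 \<omega> = x1" using x1_det by blast
    have "integrable M (\<lambda>\<omega>. (norm (x 1 \<omega>))\<^sup>2) \<longleftrightarrow> integrable M (\<lambda>_. (norm x1)\<^sup>2)"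
      by (rule Bochner_Integration.integrable_cong) (use x1 in auto)
    then show ?case unfolding V_def by simp
  next
    case (step t)
    have bI: "integrable M (\<lambda>\<omega>. 3 * (cY t * V t \<omega> + dY t) + 3 * ((\<alpha> t)\<^sup>2 * (norm (\<xi> t \<omega>))\<^sup>2) + 3 * ((\<gamma> t)\<^sup>2 * (norm (w t \<omega>))\<^sup>2))"
      using step.IH xiI[OF step(1)] wI[OF step(1)] by auto
    show ?case
    proof (rule Bochner_Integration.integrable_bound[OF bI])
      show "V (Suc t) \<in> borel_measurable M" unfolding V_def using xm[of "Suc t"] by measurable
      show "AE \<omega> in M. norm (V (Suc t) \<omega>) \<le> norm (3 * (cY t * V t \<omega> + dY t) + 3 * ((\<alpha> t)\<^sup>2 * (norm (\<xi> t \<omega>))\<^sup>2) + 3 * ((\<gamma> t)\<^sup>2 * (norm (w t \<omega>))\<^sup>2))"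
      proof (rule AE_I2)
        fix \<omega> assume \<omega>: "\<omega> \<in> space M"
        have "V (Suc t) \<omega> = (norm (Y t (x t \<omega>) - \<alpha> t *\<^sub>R \<xi> t \<omega> - (- \<gamma> t *\<^sub>R w t \<omega>)))\<^sup>2"
          unfolding V_def rec'[OF step(1) \<omega>] by simp
        also have "\<dots> \<le> 3 * ((norm (Y t (x t \<omega>)))\<^sup>2 + (norm (\<alpha> t *\<^sub>R \<xi> t \<omega>))\<^sup>2 + (norm (- \<gamma> t *\<^sub>R w t \<omega>))\<^sup>2)"
          by (rule norm3)
        also have "\<dots> \<le> 3 * (cY t * V t \<omega> + dY t) + 3 * ((\<alpha> t)\<^sup>2 * (norm (\<xi> t \<omega>))\<^sup>2) + 3 * ((\<gamma> t)\<^sup>2 * (norm (w t \<omega>))\<^sup>2)"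
          using Ycrude[of t "x t \<omega>"] unfolding V_def by (simp add: power_mult_distrib)
        finally have "V (Suc t) \<omega> \<le> 3 * (cY t * V t \<omega> + dY t) + 3 * ((\<alpha> t)\<^sup>2 * (norm (\<xi> t \<omega>))\<^sup>2) + 3 * ((\<gamma> t)\<^sup>2 * (norm (w t \<omega>))\<^sup>2)" .
        moreover have "0 \<le> V (Suc t) \<omega>" unfolding V_def by simp
        ultimately show "norm (V (Suc t) \<omega>) \<le> norm (3 * (cY t * V t \<omega> + dY t) + 3 * ((\<alpha> t)\<^sup>2 * (norm (\<xi> t \<omega>))\<^sup>2) + 3 * ((\<gamma> t)\<^sup>2 * (norm (w t \<omega>))\<^sup>2))"
          by simp
      qed
    qed
  qed
  have YxM[measurable]: "(\<lambda>\<omega>. Y t (x t \<omega>)) \<in> borel_measurable M" if "t \<ge> 1" for t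
    using xm[OF that] by measurable
  have YI: "integrable M (\<lambda>\<omega>. (norm (Y t (x t \<omega>)))\<^sup>2)" if "t \<ge> 1" for t
  proof (rule Bochner_Integration.integrable_bound)
    show "integrable M (\<lambda>\<omega>. cY t * V t \<omega> + dY t)" using VI[OF that] by auto
    show "(\<lambda>\<omega>. (norm (Y t (x t \<omega>)))\<^sup>2) \<in> borel_measurable M" using YxM[OF that] by measurable
    show "AE \<omega> in M. norm ((norm (Y t (x t \<omega>)))\<^sup>2) \<le> norm (cY t * V t \<omega> + dY t)"
      using Ycrude[of t] cY0[of t] dY0[of t] unfolding V_def
      by (intro AE_I2) (simp add: add_nonneg_nonneg)
  qed
  have YnI: "integrable M (\<lambda>\<omega>. norm (Y t (x t \<omega>)))" if "t \<ge> 1" for t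
  proof (rule Bochner_Integration.integrable_bound)
    show "integrable M (\<lambda>\<omega>. 1 + (norm (Y t (x t \<omega>)))\<^sup>2)" using YI[OF that] by auto
    show "(\<lambda>\<omega>. norm (Y t (x t \<omega>))) \<in> borel_measurable M" using YxM[OF that] by measurable
    show "AE \<omega> in M. norm (norm (Y t (x t \<omega>))) \<le> norm (1 + (norm (Y t (x t \<omega>)))\<^sup>2)"
      using le_one_plus_sq by (intro AE_I2) (simp add: add_nonneg_nonneg)
  qed
  have YcI: "integrable M (\<lambda>\<omega>. Y t (x t \<omega>) $ n $ i)" if "t \<ge> 1" for t n i
  proof (rule Bochner_Integration.integrable_bound[OF YnI[OF that]])
    show "(\<lambda>\<omega>. Y t (x t \<omega>) $ n $ i) \<in> borel_measurable M" using YxM[OF that] by measurable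
    show "AE \<omega> in M. norm (Y t (x t \<omega>) $ n $ i) \<le> norm (norm (Y t (x t \<omega>)))"
    proof (intro AE_I2)
      fix \<omega>
      have "norm (Y t (x t \<omega>) $ n $ i) \<le> norm (Y t (x t \<omega>) $ n)" by (rule Finite_Cartesian_Product.norm_nth_le)
      also have "\<dots> \<le> norm (Y t (x t \<omega>))" by (rule Finite_Cartesian_Product.norm_nth_le)
      finally show "norm (Y t (x t \<omega>) $ n $ i) \<le> norm (norm (Y t (x t \<omega>)))" by simp
    qed
  qed
  have cross: "integrable M (\<lambda>\<omega>. Y t (x t \<omega>) \<bullet> w t \<omega>) \<and> (\<integral>\<omega>. Y t (x t \<omega>) \<bullet> w t \<omega> \<partial>M) = 0" if "t \<ge> 1" for t
  proof -
    have one: "integrable M (\<lambda>\<omega>. Y t (x t \<omega>) $ n $ i * w t \<omega> $ n $ i) \<and> (\<integral>\<omega>. Y t (x t \<omega>) $ n $ i * w t \<omega> $ n $ i \<partial>M) = 0" for n i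
    proof -
      have Wm: "(\<lambda>\<omega>. w t \<omega> $ n) \<in> borel_measurable M" using wm[of t] by measurable
      have hb: "(\<lambda>X. Y t X $ n $ i) \<in> borel_measurable borel" by measurable
      have hF: "(\<lambda>\<omega>. Y t (x t \<omega>) $ n $ i) \<in> borel_measurable (F t)"
        using measurable_compose[OF xF[OF that] hb] by simp
      have hM: "(\<lambda>\<omega>. Y t (x t \<omega>) $ n $ i) \<in> borel_measurable M" using YxM[OF that] by measurable
      show ?thesis
        using indep_zero[OF prob A7_indep_past[OF that, of n] Wm hF spF hM YcI[OF that] conjunct1[OF wmom[OF that]] conjunct1[OF conjunct2[OF wmom[OF that]]]]
        by simp
    qed
    have I: "integrable M (\<lambda>\<omega>. Y t (x t \<omega>) \<bullet> w t \<omega>)"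
      unfolding inner_vec2 by (intro Bochner_Integration.integrable_sum) (use one in auto)
    have "(\<integral>\<omega>. Y t (x t \<omega>) \<bullet> w t \<omega> \<partial>M) = (\<Sum>n\<in>UNIV. \<Sum>i\<in>UNIV. (\<integral>\<omega>. Y t (x t \<omega>) $ n $ i * w t \<omega> $ n $ i \<partial>M))"
      unfolding inner_vec2
      by (subst Bochner_Integration.integral_sum) (use one in \<open>auto intro!: Bochner_Integration.integrable_sum sum.cong Bochner_Integration.integral_sum\<close>)
    also have "\<dots> = 0" using one by simp
    finally show ?thesis using I by simp
  qed
  define u where "u t = (\<integral>\<omega>. V t \<omega> \<partial>M)" for t
  define a where "a t = 2*\<alpha> t*\<beta> t*N + (2*\<alpha> t*\<beta> t*N + (\<alpha> t)\<^sup>2) * (2 * K\<^sup>2)" for t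
  define b where "b t = 2*\<alpha> t*Cg + (2*\<alpha> t*\<beta> t*N + (\<alpha> t)\<^sup>2) * G2" for t
  have mainineq: "u (Suc t) \<le> (1 + e) * ((1 + a t) * u t + b t + (\<gamma> t)\<^sup>2 * (N * dd)) + (1 + 1/e) * ((\<alpha> t)\<^sup>2 * B)"
    if t1: "t \<ge> 1" and ab: "0 \<le> \<alpha> t" "0 \<le> \<beta> t" "\<beta> t * N \<le> 1" and e: "e > 0" for t e
  proof -
    define R where "R \<omega> = (1 + e) * ((norm (Y t (x t \<omega>)))\<^sup>2 + 2 * \<gamma> t * (Y t (x t \<omega>) \<bullet> w t \<omega>) + (\<gamma> t)\<^sup>2 * (norm (w t \<omega>))\<^sup>2)
        + (1 + 1/e) * ((\<alpha> t)\<^sup>2 * (norm (\<xi> t \<omega>))\<^sup>2)" for \<omega>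
    have cI: "integrable M (\<lambda>\<omega>. Y t (x t \<omega>) \<bullet> w t \<omega>)" and c0: "(\<integral>\<omega>. Y t (x t \<omega>) \<bullet> w t \<omega> \<partial>M) = 0"
      using cross[OF t1] by auto
    have RI: "integrable M R" unfolding R_def using YI[OF t1] cI wI[OF t1] xiI[OF t1] by auto
    have pt: "V (Suc t) \<omega> \<le> R \<omega>" if \<omega>: "\<omega> \<in> space M" for \<omega>
    proof -
      have "V (Suc t) \<omega> = (norm ((Y t (x t \<omega>) + \<gamma> t *\<^sub>R w t \<omega>) - \<alpha> t *\<^sub>R \<xi> t \<omega>))\<^sup>2"
        unfolding V_def rec'[OF t1 \<omega>] by (simp add: algebra_simps)
      also have "\<dots> \<le> (1 + e) * (norm (Y t (x t \<omega>) + \<gamma> t *\<^sub>R w t \<omega>))\<^sup>2 + (1 + 1/e) * (norm (\<alpha> t *\<^sub>R \<xi> t \<omega>))\<^sup>2"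
        by (rule norm_eps[OF e])
      also have "\<dots> = R \<omega>" unfolding R_def norm_sq_add by (simp add: power_mult_distrib)
      finally show ?thesis .
    qed
    have "u (Suc t) \<le> (\<integral>\<omega>. R \<omega> \<partial>M)"
      unfolding u_def using VI[of "Suc t"] RI pt t1 by (intro integral_mono) auto
    also have "(\<integral>\<omega>. R \<omega> \<partial>M) = (1 + e) * ((\<integral>\<omega>. (norm (Y t (x t \<omega>)))\<^sup>2 \<partial>M) + 2 * \<gamma> t * (\<integral>\<omega>. Y t (x t \<omega>) \<bullet> w t \<omega> \<partial>M) + (\<gamma> t)\<^sup>2 * (\<integral>\<omega>. (norm (w t \<omega>))\<^sup>2 \<partial>M))
        + (1 + 1/e) * ((\<alpha> t)\<^sup>2 * (\<integral>\<omega>. (norm (\<xi> t \<omega>))\<^sup>2 \<partial>M))"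
      unfolding R_def using YI[OF t1] cI wI[OF t1] xiI[OF t1] by (simp add: Bochner_Integration.integral_add)
    also have "\<dots> = (1 + e) * ((\<integral>\<omega>. (norm (Y t (x t \<omega>)))\<^sup>2 \<partial>M) + (\<gamma> t)\<^sup>2 * (N * dd))
        + (1 + 1/e) * ((\<alpha> t)\<^sup>2 * (\<integral>\<omega>. (norm (\<xi> t \<omega>))\<^sup>2 \<partial>M))"
      using c0 wE[OF t1] by simp
    finally have U1: "u (Suc t) \<le> (1 + e) * ((\<integral>\<omega>. (norm (Y t (x t \<omega>)))\<^sup>2 \<partial>M) + (\<gamma> t)\<^sup>2 * (N * dd))
        + (1 + 1/e) * ((\<alpha> t)\<^sup>2 * (\<integral>\<omega>. (norm (\<xi> t \<omega>))\<^sup>2 \<partial>M))" .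
    have IY: "(\<integral>\<omega>. (norm (Y t (x t \<omega>)))\<^sup>2 \<partial>M) \<le> (1 + a t) * u t + b t"
    proof -
      have "(\<integral>\<omega>. (norm (Y t (x t \<omega>)))\<^sup>2 \<partial>M) \<le> (\<integral>\<omega>. (1 + a t) * V t \<omega> + b t \<partial>M)"
      proof (rule integral_mono)
        show "integrable M (\<lambda>\<omega>. (norm (Y t (x t \<omega>)))\<^sup>2)" by (rule YI[OF t1])
        show "integrable M (\<lambda>\<omega>. (1 + a t) * V t \<omega> + b t)" using VI[OF t1] by auto
        fix \<omega>
        show "(norm (Y t (x t \<omega>)))\<^sup>2 \<le> (1 + a t) * V t \<omega> + b t"
          using step_det[OF A1_lip A2_C1 A2 G_undirected ab(1,2) ab(3)[unfolded N_def], of "x t \<omega>"]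
          unfolding Y_def a_def b_def V_def N_def Cg_def G2_def LL_def by simp
      qed
      also have "\<dots> = (1 + a t) * u t + b t" unfolding u_def using VI[OF t1] by (simp add: P.prob_space)
      finally show ?thesis .
    qed
    have IX: "(\<integral>\<omega>. (norm (\<xi> t \<omega>))\<^sup>2 \<partial>M) \<le> B" by (rule xiE[OF t1])
    have m1: "(1 + e) * ((\<integral>\<omega>. (norm (Y t (x t \<omega>)))\<^sup>2 \<partial>M) + (\<gamma> t)\<^sup>2 * (N * dd)) \<le> (1 + e) * ((1 + a t) * u t + b t + (\<gamma> t)\<^sup>2 * (N * dd))"
      using IY e by (intro mult_left_mono) auto
    have m2: "(1 + 1/e) * ((\<alpha> t)\<^sup>2 * (\<integral>\<omega>. (norm (\<xi> t \<omega>))\<^sup>2 \<partial>M)) \<le> (1 + 1/e) * ((\<alpha> t)\<^sup>2 * B)"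
      using IX e by (intro mult_left_mono) auto
    show ?thesis using U1 m1 m2 by linarith
  qed
  have u0: "0 \<le> u t" for t unfolding u_def V_def by simp
  show ?thesis
  proof (intro allI impI)
    fix \<eta> :: real assume \<eta>: "\<eta> > 1/2"
    define \<delta> where "\<delta> = min \<tau>\<beta> ((2*\<eta> - 1)/2)"
    have \<delta>: "0 < \<delta>" "\<delta> \<le> \<tau>\<beta>" "\<delta> < 1" "\<delta> < 2*\<eta> - 1"
    proof -
      have m1: "\<delta> \<le> (2*\<eta> - 1)/2" unfolding \<delta>_def by (rule min.cobounded2)
      have m2: "\<delta> \<le> \<tau>\<beta>" unfolding \<delta>_def by (rule min.cobounded1)
      have m3: "0 < \<delta>" unfolding \<delta>_def using A8_tau \<eta> by simp
      show "0 < \<delta>" by (rule m3)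
      show "\<delta> \<le> \<tau>\<beta>" by (rule m2)
      show "\<delta> < 1" using m2 A8_tau by linarith
      show "\<delta> < 2*\<eta> - 1" using m1 \<eta> by (simp add: field_simps)
    qed
    obtain T where T: "\<forall>t\<ge>T. \<alpha> t = c\<alpha> / real t \<and> \<beta> t = c\<beta> / real t powr \<tau>\<beta> \<and>
        \<gamma> t = c\<gamma> / (sqrt (real t) * sqrt (ln (ln (real t))))" using A8 by blast
    have lim: "((\<lambda>t. c\<beta> * real t powr (-\<tau>\<beta>)) \<longlongrightarrow> 0) sequentially"
      by (intro tendsto_mult_right_zero tendsto_neg_powr filterlim_real_sequentially) (use A8_tau in auto)
    have ev1: "eventually (\<lambda>t. c\<beta> * real t powr (-\<tau>\<beta>) < 1/N) sequentially"
      using N1 by (intro order_tendstoD(2)[OF lim]) auto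
    have "filterlim (\<lambda>t. ln (ln (real t))) at_top sequentially"
      by (rule filterlim_compose[OF ln_at_top filterlim_compose[OF ln_at_top filterlim_real_sequentially]])
    then have ev2: "eventually (\<lambda>t. 1 \<le> ln (ln (real t))) sequentially"
      by (simp add: filterlim_at_top)
    have "eventually (\<lambda>t. t \<ge> max T 2 \<and> c\<beta> * real t powr (-\<tau>\<beta>) < 1/N \<and> 1 \<le> ln (ln (real t))) sequentially"
      using ev1 ev2 eventually_ge_at_top[of "max T 2"] by eventually_elim auto
    then obtain T1 where T1: "\<And>t. t \<ge> T1 \<Longrightarrow> t \<ge> max T 2 \<and> c\<beta> * real t powr (-\<tau>\<beta>) < 1/N \<and> 1 \<le> ln (ln (real t))"
      by (auto simp: eventually_sequentially)
    have T11: "1 \<le> T1" using T1[of T1] by simp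
    have tfacts: "\<alpha> t = c\<alpha> / real t \<and> \<beta> t = c\<beta> / real t powr \<tau>\<beta> \<and> \<gamma> t = c\<gamma> / (sqrt (real t) * sqrt (ln (ln (real t))))
        \<and> 0 \<le> \<alpha> t \<and> 0 \<le> \<beta> t \<and> \<beta> t * N \<le> 1 \<and> 1 \<le> t \<and> 1 \<le> ln (ln (real t))" if "t \<ge> T1" for t
    proof -
      have t: "t \<ge> T" "t \<ge> 2" "c\<beta> * real t powr (-\<tau>\<beta>) < 1/N" "1 \<le> ln (ln (real t))" using T1[OF that] by auto
      have f: "\<alpha> t = c\<alpha> / real t" "\<beta> t = c\<beta> / real t powr \<tau>\<beta>" "\<gamma> t = c\<gamma> / (sqrt (real t) * sqrt (ln (ln (real t))))"
        using T t(1) by auto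
      have "\<beta> t = c\<beta> * real t powr (-\<tau>\<beta>)" unfolding f by (simp add: powr_minus divide_inverse)
      then have "\<beta> t * N < 1" using t(3) N1 by (simp add: field_simps)
      then show ?thesis using f t A8_c by auto
    qed
    define ep where "ep t = real t powr -(1+\<delta>)" for t
    define rr where "rr t = (if t \<ge> T1 then ep t + a t + ep t * a t else 0)" for t
    define Da where "Da = 1 + 2 * (2*c\<alpha>*c\<beta>*N + (2*c\<alpha>*c\<beta>*N + c\<alpha>\<^sup>2) * (2 * K\<^sup>2))"
    define Cs where "Cs = 2 * (2*c\<alpha>*Cg + (2*c\<alpha>*c\<beta>*N + c\<alpha>\<^sup>2) * G2 + c\<gamma>\<^sup>2 * (N * dd)) + 2 * B * c\<alpha>\<^sup>2"
    have as: "0 < ep t \<and> 0 \<le> ep t + a t + ep t * a t \<and> ep t + a t + ep t * a t \<le> Da * real t powr -(1+\<delta>) \<and>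
        (1 + ep t) * (b t + (\<gamma> t)\<^sup>2 * (N * dd)) + (1 + 1/ep t) * ((\<alpha> t)\<^sup>2 * B) \<le> Cs * real t powr (\<delta> - 1)"
      if "t \<ge> T1" for t
    proof -
      have tf: "\<alpha> t = c\<alpha> / real t" "\<beta> t = c\<beta> / real t powr \<tau>\<beta>" "\<gamma> t = c\<gamma> / (sqrt (real t) * sqrt (ln (ln (real t))))"
        "1 \<le> t" "1 \<le> ln (ln (real t))" using tfacts[OF that] by auto
      have Nd: "0 \<le> N * dd" using N1 unfolding dd_def by simp
      note A = asym[of "real t" \<delta> \<tau>\<beta> c\<alpha> c\<beta> N K "ln (ln (real t))" Cg G2 B "N * dd" "\<alpha> t" "\<beta> t" "\<gamma> t" c\<gamma> "ep t" "a t" "b t"]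
      show ?thesis
        using A tf \<delta> A8_c N1 A1_K Cg0 G20 A6_B Nd unfolding Da_def Cs_def ep_def a_def b_def by auto
    qed
    have rr0: "0 \<le> rr t" for t unfolding rr_def using as by auto
    have rrs: "summable rr"
    proof (rule summable_comparison_test')
      show "summable (\<lambda>t. Da * real t powr -(1+\<delta>))"
        using summable_real_powr_iff[of "-(1+\<delta>)"] \<delta> by (intro summable_mult) auto
      fix t assume "t \<ge> T1"
      then show "norm (rr t) \<le> Da * real t powr -(1+\<delta>)" unfolding rr_def using as[of t] by auto
    qed
    have Cs0: "0 \<le> Cs" unfolding Cs_def using A8_c Cg0 G20 N1 A6_B unfolding dd_def by simp
    have stp: "u (Suc t) \<le> (1 + rr t) * u t + Cs * real t powr (\<delta> - 1)" if "t \<ge> T1" for t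
    proof -
      have tf: "1 \<le> t" "0 \<le> \<alpha> t" "0 \<le> \<beta> t" "\<beta> t * N \<le> 1" using tfacts[OF that] by auto
      have m: "u (Suc t) \<le> (1 + ep t) * ((1 + a t) * u t + b t + (\<gamma> t)\<^sup>2 * (N * dd)) + (1 + 1/ep t) * ((\<alpha> t)\<^sup>2 * B)"
        using mainineq[OF tf(1) tf(2) tf(3) tf(4), of "ep t"] as[OF that] by simp
      have "(1 + ep t) * ((1 + a t) * u t + b t + (\<gamma> t)\<^sup>2 * (N * dd)) + (1 + 1/ep t) * ((\<alpha> t)\<^sup>2 * B)
          = (1 + rr t) * u t + ((1 + ep t) * (b t + (\<gamma> t)\<^sup>2 * (N * dd)) + (1 + 1/ep t) * ((\<alpha> t)\<^sup>2 * B))"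
        unfolding rr_def using that by (simp add: algebra_simps)
      then show ?thesis using m as[OF that] by linarith
    qed
    obtain Q where Q: "\<And>t. t \<ge> T1 \<Longrightarrow> u t \<le> Q * real t powr \<delta>"
      using seq_growth[OF \<delta>(1) \<delta>(3) T11 rr0 rrs Cs0 stp] by blast
    define cc where "cc k = u (Suc k) / real (Suc k) powr (2*\<eta>)" for k
    have cc0: "0 \<le> cc k" for k unfolding cc_def using u0 by simp
    have ccs: "summable cc"
    proof (rule summable_comparison_test')
      show "summable (\<lambda>k. max Q 0 * real (Suc k) powr (\<delta> - 2*\<eta>))"
      proof (intro summable_mult)
        have "summable (\<lambda>k. real k powr (\<delta> - 2*\<eta>))" using summable_real_powr_iff[of "\<delta> - 2*\<eta>"] \<delta> by simp
        then show "summable (\<lambda>k. real (Suc k) powr (\<delta> - 2*\<eta>))"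
          using summable_Suc_iff[of "\<lambda>k. real k powr (\<delta> - 2*\<eta>)"] by simp
      qed
      fix k assume k: "k \<ge> T1"
      have pos: "0 < real (Suc k) powr (2*\<eta>)" by simp
      have "u (Suc k) \<le> max Q 0 * real (Suc k) powr \<delta>"
      proof -
        have "u (Suc k) \<le> Q * real (Suc k) powr \<delta>" using Q[of "Suc k"] k by simp
        also have "\<dots> \<le> max Q 0 * real (Suc k) powr \<delta>" by (intro mult_right_mono) auto
        finally show ?thesis .
      qed
      then have "cc k \<le> max Q 0 * real (Suc k) powr \<delta> / real (Suc k) powr (2*\<eta>)"
        unfolding cc_def using pos by (simp add: divide_right_mono)
      also have "\<dots> = max Q 0 * real (Suc k) powr (\<delta> - 2*\<eta>)" by (simp add: powr_diff)
      finally show "norm (cc k) \<le> max Q 0 * real (Suc k) powr (\<delta> - 2*\<eta>)" using cc0[of k] by simp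
    qed
    define Z where "Z k \<omega> = ennreal (V (Suc k) \<omega> / real (Suc k) powr (2*\<eta>))" for k \<omega>
    have Zm[measurable]: "Z k \<in> borel_measurable M" for k
      unfolding Z_def V_def using xm[of "Suc k"] by measurable
    have Zi: "(\<integral>\<^sup>+\<omega>. Z k \<omega> \<partial>M) = ennreal (cc k)" for k
    proof -
      have "(\<integral>\<^sup>+\<omega>. Z k \<omega> \<partial>M) = ennreal (\<integral>\<omega>. V (Suc k) \<omega> / real (Suc k) powr (2*\<eta>) \<partial>M)"
      proof -
        have iI: "integrable M (\<lambda>\<omega>. V (Suc k) \<omega> / real (Suc k) powr (2*\<eta>))" using VI[of "Suc k"] by simp
        have "AE \<omega> in M. 0 \<le> V (Suc k) \<omega> / real (Suc k) powr (2*\<eta>)" unfolding V_def by simp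
        then show ?thesis unfolding Z_def by (rule nn_integral_eq_integral[OF iI])
      qed
      then show ?thesis unfolding cc_def u_def by simp
    qed
    have "(\<integral>\<^sup>+\<omega>. (\<Sum>k. Z k \<omega>) \<partial>M) = (\<Sum>k. (\<integral>\<^sup>+\<omega>. Z k \<omega> \<partial>M))"
      by (rule nn_integral_suminf) simp
    also have "\<dots> = (\<Sum>k. ennreal (cc k))" by (simp add: Zi)
    finally have "(\<integral>\<^sup>+\<omega>. (\<Sum>k. Z k \<omega>) \<partial>M) \<noteq> \<infinity>"
      using ennreal_suminf_neq_top[OF ccs cc0] by simp
    then have AEfin: "AE \<omega> in M. (\<Sum>k. Z k \<omega>) \<noteq> \<infinity>"
      by (intro nn_integral_PInf_AE) auto
    show "AE \<omega> in M. bdd_above ((\<lambda>t. norm (x t \<omega>) / real t powr \<eta>) ` {1..})"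
      using AEfin
    proof eventually_elim
      case (elim \<omega>)
      define S where "S = enn2real (\<Sum>k. Z k \<omega>)"
      have bnd: "norm (x t \<omega>) / real t powr \<eta> \<le> sqrt S" if t: "t \<ge> 1" for t
      proof -
        obtain k where k: "t = Suc k" using t by (cases t) auto
        have "Z k \<omega> \<le> (\<Sum>k. Z k \<omega>)"
          using sum_le_suminf[of "\<lambda>k. Z k \<omega>" "{k}"] by simp
        then have "enn2real (Z k \<omega>) \<le> S"
          unfolding S_def using elim by (intro enn2real_mono) (auto simp: top.not_eq_extremum)
        then have "V (Suc k) \<omega> / real (Suc k) powr (2*\<eta>) \<le> S"
          unfolding Z_def V_def by simp
        moreover have "(norm (x t \<omega>) / real t powr \<eta>)\<^sup>2 = V (Suc k) \<omega> / real (Suc k) powr (2*\<eta>)"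
        proof -
          have "(real t powr \<eta>)\<^sup>2 = real t powr (\<eta> + \<eta>)" by (simp only: power2_eq_square powr_add)
          also have "\<eta> + \<eta> = 2*\<eta>" by simp
          finally have "(real t powr \<eta>)\<^sup>2 = real t powr (2*\<eta>)" .
          then show ?thesis unfolding V_def k by (simp add: power_divide)
        qed
        ultimately show ?thesis by (intro real_le_rsqrt) simp
      qed
      show ?case unfolding bdd_above_def using bnd by auto
    qed
  qed
qed

end
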